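(* Let $\mathcal C$ be a category, let $\mathcal E$ be a category with sums, and let $F:\mathcal E\to\mathrm{Fam}\,\mathcal C$ be a sum-preserving discrete fibration. Then there are a category $\mathcal D$ and a discrete fibration $G:\mathcal D\to\mathcal C$ such that $\mathcal E$ is (equivalent to) $\mathrm{Fam}\,\mathcal D$ and $F$ is (identified under this equivalence with) $\mathrm{Fam}\,G$.
   Context: For a category $\mathcal C$, $\mathrm{Fam}\,\mathcal C$ is the category whose objects are families $A_i\ (i\in I)$ of objects of $\mathcal C$ indexed by a set $I$, and whose arrows $A_i\,(i\in I)\to B_j\,(j\in J)$ are a map $f:I\to J$ together with arrows $\alpha_i:A_i\to B_{fi}$ in $\mathcal C$. It is the free completion of $\mathcal C$ under sums. For a functor $G:\mathcal D\to\mathcal C$, $\mathrm{Fam}\,G:\mathrm{Fam}\,\mathcal D\to\mathrm{Fam}\,\mathcal C$ sends a family $A_i\,(i\in I)$ to $GA_i\,(i\in I)$ and an arrow $(f,\alpha_i)$ to $(f,G\alpha_i)$. A functor $F$ is a discrete fibration if every arrow into $FX$ has a unique lift with codomain $X$. *)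

theory Defs
  imports "HOL-Library.FuncSet"
begin

record ('o, 'a) category =
  Obj :: "'o set"
  Arr :: "'a set"
  Dom :: "'a \<Rightarrow> 'o"
  Cod :: "'a \<Rightarrow> 'o"
  Ident :: "'o \<Rightarrow> 'a"
  Comp :: "'a \<Rightarrow> 'a \<Rightarrow> 'a"   (* Comp C g f = g \<circ> f *)

definition hom :: "('o, 'a) category \<Rightarrow> 'o \<Rightarrow> 'o \<Rightarrow> 'a set" where
  "hom C X Y = {f \<in> Arr C. Dom C f = X \<and> Cod C f = Y}"

definition is_category :: "('o, 'a) category \<Rightarrow> bool" where
  "is_category C \<longleftrightarrow>
     (\<forall>f\<in>Arr C. Dom C f \<in> Obj C \<and> Cod C f \<in> Obj C) \<and>
     (\<forall>X\<in>Obj C. Ident C X \<in> hom C X X) \<and>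
     (\<forall>f\<in>Arr C. \<forall>g\<in>Arr C. Cod C f = Dom C g \<longrightarrow>
         Comp C g f \<in> hom C (Dom C f) (Cod C g)) \<and>
     (\<forall>f\<in>Arr C. Comp C (Ident C (Cod C f)) f = f \<and> Comp C f (Ident C (Dom C f)) = f) \<and>
     (\<forall>f\<in>Arr C. \<forall>g\<in>Arr C. \<forall>h\<in>Arr C. Cod C f = Dom C g \<longrightarrow> Cod C g = Dom C h \<longrightarrow>
         Comp C h (Comp C g f) = Comp C (Comp C h g) f)"

definition is_functor ::
  "('o, 'a) category \<Rightarrow> ('p, 'b) category \<Rightarrow> ('o \<Rightarrow> 'p) \<Rightarrow> ('a \<Rightarrow> 'b) \<Rightarrow> bool" where
  "is_functor C D Fo Fa \<longleftrightarrow>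
     is_category C \<and> is_category D \<and>
     (\<forall>X\<in>Obj C. Fo X \<in> Obj D) \<and>
     (\<forall>f\<in>Arr C. Fa f \<in> hom D (Fo (Dom C f)) (Fo (Cod C f))) \<and>
     (\<forall>X\<in>Obj C. Fa (Ident C X) = Ident D (Fo X)) \<and>
     (\<forall>f\<in>Arr C. \<forall>g\<in>Arr C. Cod C f = Dom C g \<longrightarrow> Fa (Comp C g f) = Comp D (Fa g) (Fa f))"

definition is_iso :: "('o, 'a) category \<Rightarrow> 'a \<Rightarrow> bool" where
  "is_iso C f \<longleftrightarrow> f \<in> Arr C \<and>
     (\<exists>g\<in>hom C (Cod C f) (Dom C f).
        Comp C g f = Ident C (Dom C f) \<and> Comp C f g = Ident C (Cod C f))"

definition nat_iso ::
  "('o, 'a) category \<Rightarrow> ('p, 'b) category \<Rightarrow> ('o \<Rightarrow> 'p) \<Rightarrow> ('a \<Rightarrow> 'b)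
     \<Rightarrow> ('o \<Rightarrow> 'p) \<Rightarrow> ('a \<Rightarrow> 'b) \<Rightarrow> ('o \<Rightarrow> 'b) \<Rightarrow> bool" where
  "nat_iso C D Fo Fa Go Ga phi \<longleftrightarrow>
     is_functor C D Fo Fa \<and> is_functor C D Go Ga \<and>
     (\<forall>X\<in>Obj C. phi X \<in> hom D (Fo X) (Go X) \<and> is_iso D (phi X)) \<and>
     (\<forall>f\<in>Arr C. Comp D (phi (Cod C f)) (Fa f) = Comp D (Ga f) (phi (Dom C f)))"

definition is_equivalence ::
  "('o, 'a) category \<Rightarrow> ('p, 'b) category \<Rightarrow> ('o \<Rightarrow> 'p) \<Rightarrow> ('a \<Rightarrow> 'b) \<Rightarrow> bool" where
  "is_equivalence C D Ko Ka \<longleftrightarrow>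
     (\<exists>Lo La eta eps.
        is_functor C D Ko Ka \<and> is_functor D C Lo La \<and>
        nat_iso C C id id (Lo \<circ> Ko) (La \<circ> Ka) eta \<and>
        nat_iso D D id id (Ko \<circ> Lo) (Ka \<circ> La) eps)"

definition is_coproduct ::
  "('o, 'a) category \<Rightarrow> 'i set \<Rightarrow> ('i \<Rightarrow> 'o) \<Rightarrow> 'o \<Rightarrow> ('i \<Rightarrow> 'a) \<Rightarrow> bool" where
  "is_coproduct C I X S cinj \<longleftrightarrow>
     S \<in> Obj C \<and> (\<forall>i\<in>I. cinj i \<in> hom C (X i) S) \<and>
     (\<forall>Y\<in>Obj C. \<forall>g. (\<forall>i\<in>I. g i \<in> hom C (X i) Y) \<longrightarrow>
        (\<exists>!h. h \<in> hom C S Y \<and> (\<forall>i\<in>I. Comp C h (cinj i) = g i)))"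

definition has_sums :: "('o, 'a) category \<Rightarrow> 'i itself \<Rightarrow> bool" where
  "has_sums C (_ :: 'i itself) \<longleftrightarrow>
     (\<forall>(I :: 'i set) X. (\<forall>i\<in>I. X i \<in> Obj C) \<longrightarrow> (\<exists>S cinj. is_coproduct C I X S cinj))"

definition preserves_sums ::
  "('o, 'a) category \<Rightarrow> ('p, 'b) category \<Rightarrow> ('o \<Rightarrow> 'p) \<Rightarrow> ('a \<Rightarrow> 'b) \<Rightarrow> 'i itself \<Rightarrow> bool" where
  "preserves_sums C D Fo Fa (_ :: 'i itself) \<longleftrightarrow>
     (\<forall>(I :: 'i set) X S cinj. (\<forall>i\<in>I. X i \<in> Obj C) \<longrightarrow> is_coproduct C I X S cinj \<longrightarrow>
        is_coproduct D I (Fo \<circ> X) (Fo S) (Fa \<circ> cinj))"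

definition is_discrete_fibration ::
  "('o, 'a) category \<Rightarrow> ('p, 'b) category \<Rightarrow> ('o \<Rightarrow> 'p) \<Rightarrow> ('a \<Rightarrow> 'b) \<Rightarrow> bool" where
  "is_discrete_fibration E C Fo Fa \<longleftrightarrow>
     is_functor E C Fo Fa \<and>
     (\<forall>X\<in>Obj E. \<forall>u\<in>Arr C. Cod C u = Fo X \<longrightarrow>
        (\<exists>!e. e \<in> Arr E \<and> Cod E e = X \<and> Fa e = u))"

type_synonym ('i, 'o) fam_obj = "'i set \<times> ('i \<Rightarrow> 'o)"
type_synonym ('i, 'o, 'a) fam_arr =
  "('i, 'o) fam_obj \<times> ('i, 'o) fam_obj \<times> ('i \<Rightarrow> 'i) \<times> ('i \<Rightarrow> 'a)"

definition Fam_Obj :: "('o, 'a) category \<Rightarrow> ('i, 'o) fam_obj set" where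
  "Fam_Obj C = {(I, A). A \<in> I \<rightarrow>\<^sub>E Obj C}"

definition Fam :: "('o, 'a) category \<Rightarrow> (('i, 'o) fam_obj, ('i, 'o, 'a) fam_arr) category" where
  "Fam C = \<lparr>
     Obj = Fam_Obj C,
     Arr = {((I, A), (J, B), f, \<alpha>). (I, A) \<in> Fam_Obj C \<and> (J, B) \<in> Fam_Obj C \<and>
              f \<in> I \<rightarrow>\<^sub>E J \<and> \<alpha> \<in> extensional I \<and> (\<forall>i\<in>I. \<alpha> i \<in> hom C (A i) (B (f i)))},
     Dom = (\<lambda>(s, t, f, \<alpha>). s),
     Cod = (\<lambda>(s, t, f, \<alpha>). t),
     Ident = (\<lambda>(I, A). ((I, A), (I, A), (\<lambda>i\<in>I. i), (\<lambda>i\<in>I. Ident C (A i)))),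
     Comp = (\<lambda>(s2, t2, g, \<beta>) (s1, t1, f, \<alpha>).
               (s1, t2, (\<lambda>i\<in>fst s1. g (f i)), (\<lambda>i\<in>fst s1. Comp C (\<beta> (f i)) (\<alpha> i)))) \<rparr>"

definition Fam_fo :: "('o \<Rightarrow> 'p) \<Rightarrow> ('i, 'o) fam_obj \<Rightarrow> ('i, 'p) fam_obj" where
  "Fam_fo Go = (\<lambda>(I, A). (I, (\<lambda>i\<in>I. Go (A i))))"

definition Fam_fa :: "('o \<Rightarrow> 'p) \<Rightarrow> ('a \<Rightarrow> 'b) \<Rightarrow> ('i, 'o, 'a) fam_arr \<Rightarrow> ('i, 'p, 'b) fam_arr" where
  "Fam_fa Go Ga = (\<lambda>(s, t, f, \<alpha>). (Fam_fo Go s, Fam_fo Go t, f, (\<lambda>i\<in>fst s. Ga (\<alpha> i))))"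

end

theory Submission
  imports Defs
begin

lemma in_hom: "f \<in> hom C X Y \<longleftrightarrow> f \<in> Arr C \<and> Dom C f = X \<and> Cod C f = Y"
  by (simp add: hom_def)

lemma cat_dom_obj: "is_category C \<Longrightarrow> f \<in> Arr C \<Longrightarrow> Dom C f \<in> Obj C"
  and cat_cod_obj: "is_category C \<Longrightarrow> f \<in> Arr C \<Longrightarrow> Cod C f \<in> Obj C"
  and cat_id_arr: "is_category C \<Longrightarrow> X \<in> Obj C \<Longrightarrow> Ident C X \<in> Arr C"
  and cat_id_dom: "is_category C \<Longrightarrow> X \<in> Obj C \<Longrightarrow> Dom C (Ident C X) = X"
  and cat_id_cod: "is_category C \<Longrightarrow> X \<in> Obj C \<Longrightarrow> Cod C (Ident C X) = X"
  and cat_comp_arr: "is_category C \<Longrightarrow> f \<in> Arr C \<Longrightarrow> g \<in> Arr C \<Longrightarrow> Cod C f = Dom C g \<Longrightarrow> Comp C g f \<in> Arr C"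
  and cat_comp_dom: "is_category C \<Longrightarrow> f \<in> Arr C \<Longrightarrow> g \<in> Arr C \<Longrightarrow> Cod C f = Dom C g \<Longrightarrow> Dom C (Comp C g f) = Dom C f"
  and cat_comp_cod: "is_category C \<Longrightarrow> f \<in> Arr C \<Longrightarrow> g \<in> Arr C \<Longrightarrow> Cod C f = Dom C g \<Longrightarrow> Cod C (Comp C g f) = Cod C g"
  and cat_id_left: "is_category C \<Longrightarrow> f \<in> Arr C \<Longrightarrow> Comp C (Ident C (Cod C f)) f = f"
  and cat_id_right: "is_category C \<Longrightarrow> f \<in> Arr C \<Longrightarrow> Comp C f (Ident C (Dom C f)) = f"
  and cat_assoc: "is_category C \<Longrightarrow> f \<in> Arr C \<Longrightarrow> g \<in> Arr C \<Longrightarrow> h \<in> Arr C \<Longrightarrow> Cod C f = Dom C g \<Longrightarrow> Cod C g = Dom C h \<Longrightarrow>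
         Comp C h (Comp C g f) = Comp C (Comp C h g) f"
  unfolding is_category_def hom_def by blast+

lemma cat_id_left': "is_category C \<Longrightarrow> f \<in> Arr C \<Longrightarrow> Cod C f = Y \<Longrightarrow> Comp C (Ident C Y) f = f"
  and cat_id_right': "is_category C \<Longrightarrow> f \<in> Arr C \<Longrightarrow> Dom C f = Y \<Longrightarrow> Comp C f (Ident C Y) = f"
  using cat_id_left[of C f] cat_id_right[of C f] by simp_all

lemmas cat_simps = cat_id_left' cat_id_right' cat_dom_obj cat_cod_obj cat_id_arr cat_id_dom cat_id_cod cat_comp_arr cat_comp_dom cat_comp_cod

lemma functorD:
  assumes "is_functor A B Fo Fa"
  shows "is_category A" "is_category B"
    "X \<in> Obj A \<Longrightarrow> Fo X \<in> Obj B"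
    "f \<in> Arr A \<Longrightarrow> Fa f \<in> Arr B"
    "f \<in> Arr A \<Longrightarrow> Dom B (Fa f) = Fo (Dom A f)"
    "f \<in> Arr A \<Longrightarrow> Cod B (Fa f) = Fo (Cod A f)"
    "X \<in> Obj A \<Longrightarrow> Fa (Ident A X) = Ident B (Fo X)"
    "f \<in> Arr A \<Longrightarrow> g \<in> Arr A \<Longrightarrow> Cod A f = Dom A g \<Longrightarrow> Fa (Comp A g f) = Comp B (Fa g) (Fa f)"
  using assms unfolding is_functor_def hom_def by blast+

lemma functor_cong:
  assumes "is_functor A B F1 F2" "\<And>X. X \<in> Obj A \<Longrightarrow> G1 X = F1 X" "\<And>f. f \<in> Arr A \<Longrightarrow> G2 f = F2 f"
  shows "is_functor A B G1 G2"
  using assms unfolding is_functor_def in_hom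
  by (auto simp: cat_comp_arr cat_id_arr cat_dom_obj cat_cod_obj)

lemma functor_id: "is_category A \<Longrightarrow> is_functor A A id id"
  unfolding is_functor_def in_hom by (simp add: cat_dom_obj cat_cod_obj)

lemma functor_comp: "is_functor A B F1 F2 \<Longrightarrow> is_functor B C G1 G2 \<Longrightarrow> is_functor A C (G1 \<circ> F1) (G2 \<circ> F2)"
  unfolding is_functor_def in_hom by (auto simp: cat_comp_arr cat_id_arr)

lemma ident_iso: "is_category B \<Longrightarrow> X \<in> Obj B \<Longrightarrow> is_iso B (Ident B X)"
  unfolding is_iso_def by (rule conjI, simp add: cat_simps, rule bexI[of _ "Ident B X"]) (auto simp: cat_simps in_hom)

lemma nat_iso_ident:
  assumes F: "is_functor A B F1 F2" and G1: "\<And>X. X \<in> Obj A \<Longrightarrow> G1 X = F1 X" and G2: "\<And>f. f \<in> Arr A \<Longrightarrow> G2 f = F2 f"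
  shows "nat_iso A B F1 F2 G1 G2 (\<lambda>X. Ident B (F1 X))"
  unfolding nat_iso_def
proof (intro conjI ballI)
  note fd = functorD[OF F]
  show "is_functor A B F1 F2" by fact
  show "is_functor A B G1 G2" using functor_cong[OF F G1 G2] .
  fix X assume X: "X \<in> Obj A"
  show "Ident B (F1 X) \<in> hom B (F1 X) (G1 X)" using X fd G1 by (simp add: in_hom cat_simps)
  show "is_iso B (Ident B (F1 X))" using ident_iso[OF fd(2) fd(3)[OF X]] .
next
  note fd = functorD[OF F]
  fix f assume f: "f \<in> Arr A"
  have 1: "Comp B (Ident B (F1 (Cod A f))) (F2 f) = F2 f"
    by (rule cat_id_left') (use f fd in auto)
  have 2: "Comp B (F2 f) (Ident B (F1 (Dom A f))) = F2 f"
    by (rule cat_id_right') (use f fd in auto)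
  show "Comp B (Ident B (F1 (Cod A f))) (F2 f) = Comp B (G2 f) (Ident B (F1 (Dom A f)))"
    unfolding 1 G2[OF f] 2 ..
qed

lemma equiv_from_surj:
  assumes K: "is_functor A B Ko Ka"
    and faith: "\<And>x y. x \<in> Arr A \<Longrightarrow> y \<in> Arr A \<Longrightarrow> Dom A x = Dom A y \<Longrightarrow> Cod A x = Cod A y \<Longrightarrow> Ka x = Ka y \<Longrightarrow> x = y"
    and full: "\<And>X Y b. X \<in> Obj A \<Longrightarrow> Y \<in> Obj A \<Longrightarrow> b \<in> hom B (Ko X) (Ko Y) \<Longrightarrow> \<exists>a\<in>hom A X Y. Ka a = b"
    and surj: "\<And>Y. Y \<in> Obj B \<Longrightarrow> \<exists>X\<in>Obj A. Ko X = Y"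
  shows "is_equivalence A B Ko Ka"
proof -
  note k = functorD[OF K]
  have cA: "is_category A" and cB: "is_category B" using k by auto
  define Lo where "Lo Y = (SOME X. X \<in> Obj A \<and> Ko X = Y)" for Y
  have Lo: "Lo Y \<in> Obj A" "Ko (Lo Y) = Y" if "Y \<in> Obj B" for Y
    using someI_ex[of "\<lambda>X. X \<in> Obj A \<and> Ko X = Y"] surj[OF that] unfolding Lo_def by auto
  have uniq: "x = y" if "x \<in> hom A X Y" "y \<in> hom A X Y" "Ka x = Ka y" for x y X Y
    using faith that by (auto simp: in_hom)
  have pre: "\<exists>!a. a \<in> hom A X Y \<and> Ka a = b" if "X \<in> Obj A" "Y \<in> Obj A" "b \<in> hom B (Ko X) (Ko Y)" for X Y b
    using full[OF that] uniq by blast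
  define La where "La b = (THE a. a \<in> hom A (Lo (Dom B b)) (Lo (Cod B b)) \<and> Ka a = b)" for b
  have La: "La b \<in> hom A (Lo (Dom B b)) (Lo (Cod B b)) \<and> Ka (La b) = b" if "b \<in> Arr B" for b
  proof -
    have "b \<in> hom B (Ko (Lo (Dom B b))) (Ko (Lo (Cod B b)))"
      using that Lo cB by (simp add: in_hom cat_simps)
    from theI'[OF pre[OF _ _ this]] show ?thesis unfolding La_def using Lo cB that by (simp add: cat_simps)
  qed
  have L: "is_functor B A Lo La"
    unfolding is_functor_def
  proof (intro conjI ballI impI)
    show "is_category B" "is_category A" by fact+
    show "Lo X \<in> Obj A" if "X \<in> Obj B" for X using Lo that by auto
    show "La f \<in> hom A (Lo (Dom B f)) (Lo (Cod B f))" if "f \<in> Arr B" for f using La that by auto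
    show "La (Ident B X) = Ident A (Lo X)" if X: "X \<in> Obj B" for X
    proof (rule uniq)
      show "La (Ident B X) \<in> hom A (Lo X) (Lo X)" using La[of "Ident B X"] X cB by (simp add: cat_simps)
      show "Ident A (Lo X) \<in> hom A (Lo X) (Lo X)" using Lo X cA by (simp add: cat_simps in_hom)
      show "Ka (La (Ident B X)) = Ka (Ident A (Lo X))" using La[of "Ident B X"] X cB k Lo by (simp add: cat_simps)
    qed
    show "La (Comp B g f) = Comp A (La g) (La f)" if f: "f \<in> Arr B" and g: "g \<in> Arr B" and fg: "Cod B f = Dom B g" for f g
    proof (rule uniq)
      show "La (Comp B g f) \<in> hom A (Lo (Dom B f)) (Lo (Cod B g))" using La[of "Comp B g f"] f g fg cB by (simp add: cat_simps)
      show "Comp A (La g) (La f) \<in> hom A (Lo (Dom B f)) (Lo (Cod B g))" using La[OF f] La[OF g] fg cA by (simp add: cat_simps in_hom)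
      show "Ka (La (Comp B g f)) = Ka (Comp A (La g) (La f))" using La[of "Comp B g f"] La[OF f] La[OF g] f g fg cB k
        by (simp add: cat_simps in_hom)
    qed
  qed
  note l = functorD[OF L]
  define eta where "eta X = (THE a. a \<in> hom A X (Lo (Ko X)) \<and> Ka a = Ident B (Ko X))" for X
  define eti where "eti X = (THE a. a \<in> hom A (Lo (Ko X)) X \<and> Ka a = Ident B (Ko X))" for X
  have eta: "eta X \<in> hom A X (Lo (Ko X)) \<and> Ka (eta X) = Ident B (Ko X)" if X: "X \<in> Obj A" for X
  proof -
    have "Ident B (Ko X) \<in> hom B (Ko X) (Ko (Lo (Ko X)))" using X k Lo cB by (simp add: cat_simps in_hom)
    from theI'[OF pre[OF X _ this]] show ?thesis unfolding eta_def using Lo X k by simp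
  qed
  have eti: "eti X \<in> hom A (Lo (Ko X)) X \<and> Ka (eti X) = Ident B (Ko X)" if X: "X \<in> Obj A" for X
  proof -
    have "Ident B (Ko X) \<in> hom B (Ko (Lo (Ko X))) (Ko X)" using X k Lo cB by (simp add: cat_simps in_hom)
    from theI'[OF pre[OF _ X this]] show ?thesis unfolding eti_def using Lo X k by simp
  qed
  have N1: "nat_iso A A id id (Lo \<circ> Ko) (La \<circ> Ka) eta"
    unfolding nat_iso_def
  proof (intro conjI ballI)
    show "is_functor A A id id" using functor_id cA by blast
    show "is_functor A A (Lo \<circ> Ko) (La \<circ> Ka)" using functor_comp[OF K L] .
    fix X assume X: "X \<in> Obj A"
    show "eta X \<in> hom A (id X) ((Lo \<circ> Ko) X)" using eta[OF X] by simp
    show "is_iso A (eta X)"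
      unfolding is_iso_def
    proof (intro conjI bexI)
      show "eta X \<in> Arr A" using eta[OF X] by (simp add: in_hom)
      show "eti X \<in> hom A (Cod A (eta X)) (Dom A (eta X))" using eta[OF X] eti[OF X] by (simp add: in_hom)
      show "Comp A (eti X) (eta X) = Ident A (Dom A (eta X))"
        apply (rule uniq[of _ X X])
        using eta[OF X] eti[OF X] X cA cB k by (simp_all add: in_hom cat_simps)
      have "Lo (Ko X) \<in> Obj A" using X k Lo by simp
      then show "Comp A (eta X) (eti X) = Ident A (Cod A (eta X))"
        apply -
        apply (rule uniq[of _ "Lo (Ko X)" "Lo (Ko X)"])
        using eta[OF X] eti[OF X] X cA cB k Lo by (simp_all add: in_hom cat_simps)
    qed
  next
    fix f assume f: "f \<in> Arr A"
    have d: "Dom A f \<in> Obj A" and c: "Cod A f \<in> Obj A" using f cA by (simp_all add: cat_simps)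
    have Kf: "Ka f \<in> Arr B" "Dom B (Ka f) = Ko (Dom A f)" "Cod B (Ka f) = Ko (Cod A f)" using k f by auto
    show "Comp A (eta (Cod A f)) (id f) = Comp A ((La \<circ> Ka) f) (eta (Dom A f))"
      apply (rule uniq[of _ "Dom A f" "Lo (Ko (Cod A f))"])
      using eta[OF d] eta[OF c] La[OF Kf(1)] Kf f cA cB k Lo d c by (simp_all add: in_hom cat_simps)
  qed
  have N2: "nat_iso B B id id (Ko \<circ> Lo) (Ka \<circ> La) (\<lambda>X. Ident B (id X))"
    by (rule nat_iso_ident) (use functor_id cB Lo La in auto)
  show ?thesis unfolding is_equivalence_def by (intro exI conjI, rule K, rule L, rule N1, rule N2)
qed

lemma Fam_Obj_iff[simp]: "(I, A) \<in> Fam_Obj C \<longleftrightarrow> A \<in> I \<rightarrow>\<^sub>E Obj C"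
  by (simp add: Fam_Obj_def)

lemma Fam_sel[simp]:
  "Obj (Fam C) = Fam_Obj C"
  "Dom (Fam C) (s, t, f, a) = s"
  "Cod (Fam C) (s, t, f, a) = t"
  "Ident (Fam C) (I, A) = ((I, A), (I, A), (\<lambda>i\<in>I. i), (\<lambda>i\<in>I. Ident C (A i)))"
  "Comp (Fam C) (s2, t2, g, b) (s1, t1, f, a) =
     (s1, t2, (\<lambda>i\<in>fst s1. g (f i)), (\<lambda>i\<in>fst s1. Comp C (b (f i)) (a i)))"
  by (simp_all add: Fam_def)

lemma Fam_Arr_iff[simp]: "((I, A), (J, B), f, a) \<in> Arr (Fam C) \<longleftrightarrow>
   A \<in> I \<rightarrow>\<^sub>E Obj C \<and> B \<in> J \<rightarrow>\<^sub>E Obj C \<and> f \<in> I \<rightarrow>\<^sub>E J \<and> a \<in> extensional I \<and>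
   (\<forall>i\<in>I. a i \<in> hom C (A i) (B (f i)))"
  by (simp add: Fam_def)

lemma Fam_Arr_cases:
  assumes "u \<in> Arr (Fam C)"
  obtains I A J B f a where "u = ((I, A), (J, B), f, a)" "A \<in> I \<rightarrow>\<^sub>E Obj C" "B \<in> J \<rightarrow>\<^sub>E Obj C"
    "f \<in> I \<rightarrow>\<^sub>E J" "a \<in> extensional I" "\<And>i. i \<in> I \<Longrightarrow> a i \<in> hom C (A i) (B (f i))"
  using assms by (cases u) (auto simp: Fam_def)

lemma Fam_cat:
  assumes C: "is_category C"
  shows "is_category (Fam C)"
  unfolding is_category_def
proof (intro conjI ballI impI)
  fix u assume "u \<in> Arr (Fam C)"
  then show "Dom (Fam C) u \<in> Obj (Fam C)"
    by (cases rule: Fam_Arr_cases) auto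
next
  fix u assume "u \<in> Arr (Fam C)"
  then show "Cod (Fam C) u \<in> Obj (Fam C)"
    by (cases rule: Fam_Arr_cases) auto
next
  fix X assume "X \<in> Obj (Fam C)"
  then obtain I A where X: "X = (I, A)" "A \<in> I \<rightarrow>\<^sub>E Obj C" by (cases X) (auto simp: Fam_Obj_def)
  then show "Ident (Fam C) X \<in> hom (Fam C) X X"
    using C by (auto simp: in_hom cat_simps PiE_iff)
next
  fix u v assume u: "u \<in> Arr (Fam C)" and v: "v \<in> Arr (Fam C)" and uv: "Cod (Fam C) u = Dom (Fam C) v"
  from u obtain I A J B f a where u': "u = ((I, A), (J, B), f, a)" "A \<in> I \<rightarrow>\<^sub>E Obj C" "B \<in> J \<rightarrow>\<^sub>E Obj C"
    "f \<in> I \<rightarrow>\<^sub>E J" "a \<in> extensional I" "\<And>i. i \<in> I \<Longrightarrow> a i \<in> hom C (A i) (B (f i))"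
    using Fam_Arr_cases[OF u] by metis
  from v obtain J' B' K D g b where v': "v = ((J', B'), (K, D), g, b)" "B' \<in> J' \<rightarrow>\<^sub>E Obj C" "D \<in> K \<rightarrow>\<^sub>E Obj C"
    "g \<in> J' \<rightarrow>\<^sub>E K" "b \<in> extensional J'" "\<And>i. i \<in> J' \<Longrightarrow> b i \<in> hom C (B' i) (D (g i))"
    using Fam_Arr_cases[OF v] by metis
  have e: "J' = J" "B' = B" using uv u' v' by auto
  show "Comp (Fam C) v u \<in> hom (Fam C) (Dom (Fam C) u) (Cod (Fam C) v)"
    using u' v' e C by (auto simp: in_hom cat_simps PiE_iff)
next
  fix u assume u: "u \<in> Arr (Fam C)"
  from u obtain I A J B f a where u': "u = ((I, A), (J, B), f, a)" "A \<in> I \<rightarrow>\<^sub>E Obj C" "B \<in> J \<rightarrow>\<^sub>E Obj C"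
    "f \<in> I \<rightarrow>\<^sub>E J" "a \<in> extensional I" "\<And>i. i \<in> I \<Longrightarrow> a i \<in> hom C (A i) (B (f i))"
    using Fam_Arr_cases[OF u] by metis
  have 1: "(\<lambda>i\<in>I. (\<lambda>i\<in>J. i) (f i)) = f" using u'(4) by (auto simp: fun_eq_iff PiE_iff PiE_arb[OF u'(4)] PiE_mem[OF u'(4)])
  have 2: "(\<lambda>i\<in>I. Comp C ((\<lambda>i\<in>J. Ident C (B i)) (f i)) (a i)) = a"
  proof (rule ext)
    fix i show "(\<lambda>i\<in>I. Comp C ((\<lambda>i\<in>J. Ident C (B i)) (f i)) (a i)) i = a i"
    proof (cases "i \<in> I")
      case True
      then have "f i \<in> J" using u'(4) by auto
      moreover have "Comp C (Ident C (B (f i))) (a i) = a i"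
        by (rule cat_id_left'[OF C]) (use u'(6)[OF True] in \<open>auto simp: in_hom\<close>)
      ultimately show ?thesis using True by simp
    qed (simp add: extensional_arb[OF u'(5)])
  qed
  have 3: "(\<lambda>i\<in>I. f ((\<lambda>i\<in>I. i) i)) = f" using u'(4) by (auto simp: fun_eq_iff PiE_iff PiE_arb[OF u'(4)] PiE_mem[OF u'(4)])
  have 4: "(\<lambda>i\<in>I. Comp C (a ((\<lambda>i\<in>I. i) i)) ((\<lambda>i\<in>I. Ident C (A i)) i)) = a"
  proof (rule ext)
    fix i show "(\<lambda>i\<in>I. Comp C (a ((\<lambda>i\<in>I. i) i)) ((\<lambda>i\<in>I. Ident C (A i)) i)) i = a i"
    proof (cases "i \<in> I")
      case True
      have "Comp C (a i) (Ident C (A i)) = a i"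
        by (rule cat_id_right'[OF C]) (use u'(6)[OF True] in \<open>auto simp: in_hom\<close>)
      then show ?thesis using True by simp
    qed (simp add: extensional_arb[OF u'(5)])
  qed
  show "Comp (Fam C) (Ident (Fam C) (Cod (Fam C) u)) u = u"
    unfolding u'(1) Fam_sel fst_conv 1 2 ..
  show "Comp (Fam C) u (Ident (Fam C) (Dom (Fam C) u)) = u"
    unfolding u'(1) Fam_sel fst_conv 3 4 ..
next
  fix u v w assume u: "u \<in> Arr (Fam C)" and v: "v \<in> Arr (Fam C)" and w: "w \<in> Arr (Fam C)"
    and uv: "Cod (Fam C) u = Dom (Fam C) v" and vw: "Cod (Fam C) v = Dom (Fam C) w"
  from u obtain I A J B f a where u': "u = ((I, A), (J, B), f, a)" "A \<in> I \<rightarrow>\<^sub>E Obj C" "B \<in> J \<rightarrow>\<^sub>E Obj C"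
    "f \<in> I \<rightarrow>\<^sub>E J" "a \<in> extensional I" "\<And>i. i \<in> I \<Longrightarrow> a i \<in> hom C (A i) (B (f i))"
    using Fam_Arr_cases[OF u] by metis
  from v obtain J' B' K D g b where v': "v = ((J', B'), (K, D), g, b)" "B' \<in> J' \<rightarrow>\<^sub>E Obj C" "D \<in> K \<rightarrow>\<^sub>E Obj C"
    "g \<in> J' \<rightarrow>\<^sub>E K" "b \<in> extensional J'" "\<And>i. i \<in> J' \<Longrightarrow> b i \<in> hom C (B' i) (D (g i))"
    using Fam_Arr_cases[OF v] by metis
  from w obtain K' D' L G h c where w': "w = ((K', D'), (L, G), h, c)" "D' \<in> K' \<rightarrow>\<^sub>E Obj C" "G \<in> L \<rightarrow>\<^sub>E Obj C"
    "h \<in> K' \<rightarrow>\<^sub>E L" "c \<in> extensional K'" "\<And>i. i \<in> K' \<Longrightarrow> c i \<in> hom C (D' i) (G (h i))"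
    using Fam_Arr_cases[OF w] by metis
  have e: "J' = J" "B' = B" "K' = K" "D' = D" using uv vw u' v' w' by auto
  have 1: "(\<lambda>i\<in>I. (\<lambda>i\<in>J. h (g i)) (f i)) = (\<lambda>i\<in>I. h ((\<lambda>i\<in>I. g (f i)) i))"
    using u'(4) by (auto simp: fun_eq_iff PiE_iff)
  have 2: "(\<lambda>i\<in>I. Comp C ((\<lambda>i\<in>J. Comp C (c (g i)) (b i)) (f i)) (a i)) =
           (\<lambda>i\<in>I. Comp C (c ((\<lambda>i\<in>I. g (f i)) i)) ((\<lambda>i\<in>I. Comp C (b (f i)) (a i)) i))"
  proof (rule restrict_ext)
    fix i assume i: "i \<in> I"
    have fi: "f i \<in> J" using u'(4) i by auto
    have gfi: "g (f i) \<in> K" using v'(4) fi e by auto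
    show "Comp C ((\<lambda>i\<in>J. Comp C (c (g i)) (b i)) (f i)) (a i) =
           Comp C (c ((\<lambda>i\<in>I. g (f i)) i)) ((\<lambda>i\<in>I. Comp C (b (f i)) (a i)) i)"
      using i fi gfi u'(6)[OF i] v'(6)[of "f i"] w'(6)[of "g (f i)"] e C
      by (simp add: in_hom cat_assoc)
  qed
  show "Comp (Fam C) w (Comp (Fam C) v u) = Comp (Fam C) (Comp (Fam C) w v) u"
    using u' v' w' e 1 2 by simp
qed

lemma Fam_Dom_fst: "Dom (Fam C) u = fst u" and Fam_Cod_fst: "Cod (Fam C) u = fst (snd u)"
  by (simp_all add: Fam_def case_prod_beta)

lemma Fam_Arr_iff': "u \<in> Arr (Fam C) \<longleftrightarrow>
   snd (fst u) \<in> fst (fst u) \<rightarrow>\<^sub>E Obj C \<and> snd (fst (snd u)) \<in> fst (fst (snd u)) \<rightarrow>\<^sub>E Obj C \<and>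
   fst (snd (snd u)) \<in> fst (fst u) \<rightarrow>\<^sub>E fst (fst (snd u)) \<and> snd (snd (snd u)) \<in> extensional (fst (fst u)) \<and>
   (\<forall>i\<in>fst (fst u). snd (snd (snd u)) i \<in> hom C (snd (fst u) i) (snd (fst (snd u)) (fst (snd (snd u)) i)))"
proof -
  obtain I A J B f a where "u = ((I,A),(J,B),f,a)" by (metis prod.collapse)
  then show ?thesis by (simp only: Fam_Arr_iff fst_conv snd_conv)
qed

lemma Fam_Obj_iff': "X \<in> Fam_Obj C \<longleftrightarrow> snd X \<in> fst X \<rightarrow>\<^sub>E Obj C"
  by (cases X) simp

locale fibsetup =
  fixes C :: "('co, 'ca) category" and E :: "('eo, 'ea) category"
    and Fo :: "'eo \<Rightarrow> ('i, 'co) fam_obj" and Fa :: "'ea \<Rightarrow> ('i, 'co, 'ca) fam_arr" and i0 :: 'i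
  assumes catC: "is_category C" and catE: "is_category E" and sums: "has_sums E TYPE('i)"
    and disc: "is_discrete_fibration E (Fam C) Fo Fa"
begin

lemma FF: "is_functor E (Fam C) Fo Fa" using disc unfolding is_discrete_fibration_def by blast
lemmas ff = functorD[OF FF]
lemma catF: "is_category (Fam C)" using Fam_cat[OF catC] .

lemma lift_ex1: "X \<in> Obj E \<Longrightarrow> u \<in> Arr (Fam C) \<Longrightarrow> Cod (Fam C) u = Fo X \<Longrightarrow> \<exists>!e. e \<in> Arr E \<and> Cod E e = X \<and> Fa e = u"
  using disc unfolding is_discrete_fibration_def by blast

definition lift where "lift X u = (THE e. e \<in> Arr E \<and> Cod E e = X \<and> Fa e = u)"

lemma lift:
  assumes "X \<in> Obj E" "u \<in> Arr (Fam C)" "Cod (Fam C) u = Fo X"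
  shows "lift X u \<in> Arr E" "Cod E (lift X u) = X" "Fa (lift X u) = u"
  using theI'[OF lift_ex1[OF assms]] unfolding lift_def by auto

lemma lift_eq:
  assumes "e \<in> Arr E" "e' \<in> Arr E" "Cod E e = Cod E e'" "Fa e = Fa e'"
  shows "e = e'"
proof -
  have "\<exists>!x. x \<in> Arr E \<and> Cod E x = Cod E e \<and> Fa x = Fa e"
    by (rule lift_ex1) (use assms ff catE in \<open>auto simp: cat_simps\<close>)
  then show ?thesis using assms by (simp add: Ex1_def) (metis)
qed

definition ff where "ff e = fst (snd (snd (Fa e)))"
definition aa where "aa e = snd (snd (snd (Fa e)))"

lemma Fa_decomp: "e \<in> Arr E \<Longrightarrow> Fa e = (Fo (Dom E e), Fo (Cod E e), ff e, aa e)"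
  using ff(5)[of e] ff(6)[of e] unfolding ff_def aa_def Fam_Dom_fst Fam_Cod_fst by (simp add: prod_eq_iff)

lemma Fo_obj: "X \<in> Obj E \<Longrightarrow> snd (Fo X) \<in> fst (Fo X) \<rightarrow>\<^sub>E Obj C"
  using ff(3)[of X] by (simp add: Fam_Obj_iff')

lemma Fa_props:
  assumes e: "e \<in> Arr E"
  shows "ff e \<in> fst (Fo (Dom E e)) \<rightarrow>\<^sub>E fst (Fo (Cod E e))"
    "aa e \<in> extensional (fst (Fo (Dom E e)))"
    "\<And>i. i \<in> fst (Fo (Dom E e)) \<Longrightarrow> aa e i \<in> hom C (snd (Fo (Dom E e)) i) (snd (Fo (Cod E e)) (ff e i))"
  using ff(4)[OF e] unfolding Fam_Arr_iff' Fa_decomp[OF e] by auto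

definition jC where "jC s i = (({i0}, \<lambda>_\<in>{i0}. snd s i), s, \<lambda>_\<in>{i0}. i, \<lambda>_\<in>{i0}. Ident C (snd s i))"

lemma jC:
  assumes X: "X \<in> Obj E" and i: "i \<in> fst (Fo X)"
  shows "jC (Fo X) i \<in> Arr (Fam C)" "Cod (Fam C) (jC (Fo X) i) = Fo X"
    "Dom (Fam C) (jC (Fo X) i) = ({i0}, \<lambda>_\<in>{i0}. snd (Fo X) i)"
proof -
  have o: "snd (Fo X) i \<in> Obj C" using Fo_obj[OF X] i by auto
  show "jC (Fo X) i \<in> Arr (Fam C)" unfolding Fam_Arr_iff' jC_def using o Fo_obj[OF X] i catC
    by (auto simp: in_hom cat_simps)
  show "Cod (Fam C) (jC (Fo X) i) = Fo X" "Dom (Fam C) (jC (Fo X) i) = ({i0}, \<lambda>_\<in>{i0}. snd (Fo X) i)"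
    unfolding jC_def Fam_Dom_fst Fam_Cod_fst by simp_all
qed

lemma comp_jC_right:
  assumes u: "u \<in> Arr (Fam C)" and i: "i \<in> fst (fst u)"
  shows "Comp (Fam C) u (jC (fst u) i) =
    (({i0}, \<lambda>_\<in>{i0}. snd (fst u) i), fst (snd u), \<lambda>_\<in>{i0}. fst (snd (snd u)) i, \<lambda>_\<in>{i0}. snd (snd (snd u)) i)"
proof -
  obtain I A J B f a where u': "u = ((I, A), (J, B), f, a)" "A \<in> I \<rightarrow>\<^sub>E Obj C" "B \<in> J \<rightarrow>\<^sub>E Obj C"
    "f \<in> I \<rightarrow>\<^sub>E J" "a \<in> extensional I" "\<And>i. i \<in> I \<Longrightarrow> a i \<in> hom C (A i) (B (f i))"
    using Fam_Arr_cases[OF u] by metis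
  have iI: "i \<in> I" using i u' by simp
  have "Comp C (a i) (Ident C (A i)) = a i"
    by (rule cat_id_right'[OF catC]) (use u'(6)[OF iI] in \<open>auto simp: in_hom\<close>)
  then have 2: "(\<lambda>x\<in>{i0}. Comp C (a ((\<lambda>_\<in>{i0}. i) x)) ((\<lambda>_\<in>{i0}. Ident C (A i)) x)) = (\<lambda>_\<in>{i0}. a i)"
    by (intro restrict_ext) simp
  have 1: "(\<lambda>x\<in>{i0}. f ((\<lambda>_\<in>{i0}. i) x)) = (\<lambda>_\<in>{i0}. f i)" by (intro restrict_ext) simp
  show ?thesis unfolding u'(1) jC_def Fam_sel fst_conv snd_conv 1 2 ..
qed

lemma comp_jC_left:
  assumes t: "t \<in> Fam_Obj C" and j: "j \<in> fst t" and v: "v \<in> Arr (Fam C)"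
    and vc: "Cod (Fam C) v = ({i0}, \<lambda>_\<in>{i0}. snd t j)"
  shows "Comp (Fam C) (jC t j) v = (fst v, t, \<lambda>x\<in>fst (fst v). j, \<lambda>x\<in>fst (fst v). snd (snd (snd v)) x)"
proof -
  obtain K D J B g b where v': "v = ((K, D), (J, B), g, b)" "D \<in> K \<rightarrow>\<^sub>E Obj C" "B \<in> J \<rightarrow>\<^sub>E Obj C"
    "g \<in> K \<rightarrow>\<^sub>E J" "b \<in> extensional K" "\<And>i. i \<in> K \<Longrightarrow> b i \<in> hom C (D i) (B (g i))"
    using Fam_Arr_cases[OF v] by metis
  have JB: "J = {i0}" "B = (\<lambda>_\<in>{i0}. snd t j)" using vc unfolding v'(1) by simp_all
  have gx: "g x = i0" if "x \<in> K" for x using PiE_mem[OF v'(4) that] JB by simp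
  have bx: "Comp C (Ident C (snd t j)) (b x) = b x" if "x \<in> K" for x
    by (rule cat_id_left'[OF catC]) (use v'(6)[OF that] gx[OF that] JB in \<open>auto simp: in_hom\<close>)
  have 1: "(\<lambda>x\<in>K. (\<lambda>_\<in>{i0}. j) (g x)) = (\<lambda>x\<in>K. j)" by (rule restrict_ext) (simp add: gx)
  have 2: "(\<lambda>x\<in>K. Comp C ((\<lambda>_\<in>{i0}. Ident C (snd t j)) (g x)) (b x)) = (\<lambda>x\<in>K. b x)"
    by (rule restrict_ext) (simp add: gx bx)
  show ?thesis unfolding v'(1) jC_def Fam_sel fst_conv snd_conv 1 2 ..
qed

definition iota where "iota X i = lift X (jC (Fo X) i)"
definition Xc where "Xc X i = Dom E (iota X i)"

lemma iota:
  assumes X: "X \<in> Obj E" and i: "i \<in> fst (Fo X)"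
  shows "iota X i \<in> Arr E" "Cod E (iota X i) = X" "Fa (iota X i) = jC (Fo X) i"
    "Dom E (iota X i) = Xc X i" "Fo (Xc X i) = ({i0}, \<lambda>_\<in>{i0}. snd (Fo X) i)" "Xc X i \<in> Obj E"
proof -
  note l = lift[OF X jC(1,2)[OF X i]]
  show a: "iota X i \<in> Arr E" "Cod E (iota X i) = X" "Fa (iota X i) = jC (Fo X) i"
    using l unfolding iota_def by auto
  show "Dom E (iota X i) = Xc X i" unfolding Xc_def ..
  show "Fo (Xc X i) = ({i0}, \<lambda>_\<in>{i0}. snd (Fo X) i)"
    unfolding Xc_def using ff(5)[OF a(1)] a(3) jC(3)[OF X i] by simp
  show "Xc X i \<in> Obj E" unfolding Xc_def using a(1) catE by (simp add: cat_simps)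
qed

end

lemma Fam_Ident': "Ident (Fam C) X = (X, X, \<lambda>i\<in>fst X. i, \<lambda>i\<in>fst X. Ident C (snd X i))"
  by (cases X) simp

lemma Fam_Comp': "Comp (Fam C) v u = (fst u, fst (snd v), \<lambda>i\<in>fst (fst u). fst (snd (snd v)) (fst (snd (snd u)) i),
   \<lambda>i\<in>fst (fst u). Comp C (snd (snd (snd v)) (fst (snd (snd u)) i)) (snd (snd (snd u)) i))"
  by (simp add: Fam_def case_prod_beta)

lemma ext_single: "g \<in> extensional {a} \<Longrightarrow> g = (\<lambda>_\<in>{a}. g a)"
proof (rule ext)
  fix x assume g: "g \<in> extensional {a}"
  show "g x = (\<lambda>_\<in>{a}. g a) x"
    by (cases "x = a") (simp_all add: extensional_arb[OF g])
qed

context fibsetup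
begin

lemma ff_id: "X \<in> Obj E \<Longrightarrow> ff (Ident E X) = (\<lambda>i\<in>fst (Fo X). i)"
  and aa_id: "X \<in> Obj E \<Longrightarrow> aa (Ident E X) = (\<lambda>i\<in>fst (Fo X). Ident C (snd (Fo X) i))"
  unfolding ff_def aa_def using ff(7) by (simp_all add: Fam_Ident')

lemma ff_comp: "f \<in> Arr E \<Longrightarrow> g \<in> Arr E \<Longrightarrow> Cod E f = Dom E g \<Longrightarrow>
    ff (Comp E g f) = (\<lambda>i\<in>fst (Fo (Dom E f)). ff g (ff f i))"
  and aa_comp: "f \<in> Arr E \<Longrightarrow> g \<in> Arr E \<Longrightarrow> Cod E f = Dom E g \<Longrightarrow>
    aa (Comp E g f) = (\<lambda>i\<in>fst (Fo (Dom E f)). Comp C (aa g (ff f i)) (aa f i))"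
  unfolding ff_def aa_def using ff(8) ff(5) by (simp_all add: Fam_Comp' Fam_Dom_fst)

definition Dc :: "('eo, 'ea) category" where
  "Dc = \<lparr>Obj = {X \<in> Obj E. fst (Fo X) = {i0}},
         Arr = {e \<in> Arr E. fst (Fo (Dom E e)) = {i0} \<and> fst (Fo (Cod E e)) = {i0}},
         Dom = Dom E, Cod = Cod E, Ident = Ident E, Comp = Comp E\<rparr>"

lemma Dc_simps:
  "Obj Dc = {X \<in> Obj E. fst (Fo X) = {i0}}"
  "Arr Dc = {e \<in> Arr E. fst (Fo (Dom E e)) = {i0} \<and> fst (Fo (Cod E e)) = {i0}}"
  "Dom Dc = Dom E" "Cod Dc = Cod E" "Ident Dc = Ident E" "Comp Dc = Comp E"
  by (simp_all add: Dc_def)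

lemma Dc_cat: "is_category Dc"
proof -
  have 1: "\<forall>f\<in>Arr Dc. Dom Dc f \<in> Obj Dc \<and> Cod Dc f \<in> Obj Dc" using catE by (auto simp: Dc_simps cat_simps)
  have 2: "\<forall>X\<in>Obj Dc. Ident Dc X \<in> hom Dc X X" using catE by (auto simp: Dc_simps cat_simps in_hom)
  have 3: "\<forall>f\<in>Arr Dc. \<forall>g\<in>Arr Dc. Cod Dc f = Dom Dc g \<longrightarrow> Comp Dc g f \<in> hom Dc (Dom Dc f) (Cod Dc g)"
    using catE by (auto simp: Dc_simps cat_simps in_hom)
  have 4: "\<forall>f\<in>Arr Dc. Comp Dc (Ident Dc (Cod Dc f)) f = f \<and> Comp Dc f (Ident Dc (Dom Dc f)) = f"
    using catE by (auto simp: Dc_simps cat_id_left cat_id_right)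
  have 5: "\<forall>f\<in>Arr Dc. \<forall>g\<in>Arr Dc. \<forall>h\<in>Arr Dc. Cod Dc f = Dom Dc g \<longrightarrow> Cod Dc g = Dom Dc h \<longrightarrow>
         Comp Dc h (Comp Dc g f) = Comp Dc (Comp Dc h g) f"
    using catE by (auto simp: Dc_simps cat_assoc)
  show ?thesis unfolding is_category_def by (intro conjI 1 2 3 4 5)
qed

definition Go where "Go X = snd (Fo X) i0"
definition Ga where "Ga e = aa e i0"

lemma ff_single: "e \<in> Arr E \<Longrightarrow> fst (Fo (Dom E e)) = {i0} \<Longrightarrow> fst (Fo (Cod E e)) = {i0} \<Longrightarrow> ff e = (\<lambda>_\<in>{i0}. i0)"
proof (rule ext)
  fix x assume e: "e \<in> Arr E" "fst (Fo (Dom E e)) = {i0}" "fst (Fo (Cod E e)) = {i0}"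
  have m: "ff e \<in> {i0} \<rightarrow>\<^sub>E {i0}" using Fa_props(1)[OF e(1)] e by simp
  show "ff e x = (\<lambda>_\<in>{i0}. i0) x"
    by (cases "x = i0") (use PiE_mem[OF m] PiE_arb[OF m] in auto)
qed

lemma G_functor: "is_functor Dc C Go Ga"
  unfolding is_functor_def
proof (intro conjI ballI impI)
  show "is_category Dc" by (rule Dc_cat)
  show "is_category C" by (rule catC)
next
  fix X assume "X \<in> Obj Dc"
  then have X: "X \<in> Obj E" "fst (Fo X) = {i0}" by (auto simp: Dc_simps)
  show "Go X \<in> Obj C" unfolding Go_def using PiE_mem[OF Fo_obj[OF X(1)], of i0] X by simp
  show "Ga (Ident Dc X) = Ident C (Go X)" unfolding Ga_def Go_def Dc_simps aa_id[OF X(1)] using X by simp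
next
  fix f assume "f \<in> Arr Dc"
  then have f: "f \<in> Arr E" "fst (Fo (Dom E f)) = {i0}" "fst (Fo (Cod E f)) = {i0}" by (auto simp: Dc_simps)
  have "ff f i0 = i0" using ff_single[OF f] by simp
  then show "Ga f \<in> hom C (Go (Dom Dc f)) (Go (Cod Dc f))"
    unfolding Ga_def Go_def Dc_simps using Fa_props(3)[OF f(1), of i0] f by simp
next
  fix f g assume "f \<in> Arr Dc" "g \<in> Arr Dc" and fg: "Cod Dc f = Dom Dc g"
  then have f: "f \<in> Arr E" "fst (Fo (Dom E f)) = {i0}" "fst (Fo (Cod E f)) = {i0}"
    and g: "g \<in> Arr E" "fst (Fo (Dom E g)) = {i0}" "fst (Fo (Cod E g)) = {i0}" by (auto simp: Dc_simps)
  have "ff f i0 = i0" using ff_single[OF f] by simp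
  then show "Ga (Comp Dc g f) = Comp C (Ga g) (Ga f)"
    unfolding Ga_def Dc_simps using aa_comp[OF f(1) g(1)] fg f by (simp add: Dc_simps)
qed

lemma G_disc: "is_discrete_fibration Dc C Go Ga"
  unfolding is_discrete_fibration_def
proof (intro conjI ballI impI)
  show "is_functor Dc C Go Ga" by (rule G_functor)
  fix X u assume "X \<in> Obj Dc" and u: "u \<in> Arr C" and uc: "Cod C u = Go X"
  then have X: "X \<in> Obj E" "fst (Fo X) = {i0}" by (auto simp: Dc_simps)
  define v where "v = (({i0}, \<lambda>_\<in>{i0}. Dom C u), Fo X, \<lambda>_\<in>{i0}. i0, \<lambda>_\<in>{i0}. u)"
  have FX: "snd (Fo X) \<in> fst (Fo X) \<rightarrow>\<^sub>E Obj C" using Fo_obj[OF X(1)] .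
  have v: "v \<in> Arr (Fam C)" unfolding Fam_Arr_iff' v_def using FX X u uc catC
    by (auto simp: in_hom Go_def cat_simps)
  have vc: "Cod (Fam C) v = Fo X" unfolding v_def Fam_Cod_fst by simp
  note l = lift[OF X(1) v vc]
  have ldom: "Fo (Dom E (lift X v)) = ({i0}, \<lambda>_\<in>{i0}. Dom C u)"
    using ff(5)[OF l(1)] l(3) unfolding Fam_Dom_fst v_def by simp
  show "\<exists>!e. e \<in> Arr Dc \<and> Cod Dc e = X \<and> Ga e = u"
  proof (rule ex1I[of _ "lift X v"])
    show "lift X v \<in> Arr Dc \<and> Cod Dc (lift X v) = X \<and> Ga (lift X v) = u"
      using l ldom X unfolding Dc_simps Ga_def aa_def v_def by simp
  next
    fix e assume "e \<in> Arr Dc \<and> Cod Dc e = X \<and> Ga e = u"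
    then have e: "e \<in> Arr E" "fst (Fo (Dom E e)) = {i0}" "Cod E e = X" "aa e i0 = u"
      by (auto simp: Dc_simps Ga_def)
    have "aa e \<in> extensional {i0}" using Fa_props(2)[OF e(1)] e(2) by simp
    then have a1: "aa e = (\<lambda>_\<in>{i0}. u)" using ext_single e(4) by metis
    have f1: "ff e = (\<lambda>_\<in>{i0}. i0)" using ff_single[OF e(1,2)] e X by simp
    have h: "aa e i0 \<in> hom C (snd (Fo (Dom E e)) i0) (snd (Fo (Cod E e)) (ff e i0))"
      using Fa_props(3)[OF e(1), of i0] e by simp
    have s1: "snd (Fo (Dom E e)) = (\<lambda>_\<in>{i0}. Dom C u)"
    proof -
      have "Dom E e \<in> Obj E" using e catE by (simp add: cat_simps)
      from Fo_obj[OF this] have "snd (Fo (Dom E e)) \<in> extensional {i0}" using e(2) by (simp add: PiE_iff)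
      from ext_single[OF this] show ?thesis using h e(4) by (simp add: in_hom)
    qed
    have "Fa e = v" unfolding Fa_decomp[OF e(1)] v_def a1 f1 e(3) using s1 e(2)
      by (simp add: prod_eq_iff)
    then show "e = lift X v" using lift_eq[OF e(1) l(1)] l e by simp
  qed
qed

end

lemma restrict_restrict_same: "(\<lambda>x\<in>A. (\<lambda>y\<in>A. f y) x) = (\<lambda>x\<in>A. f x)"
  by (rule restrict_ext) simp

context fibsetup
begin

definition dA where "dA e i = (({i0}, \<lambda>_\<in>{i0}. snd (Fo (Dom E e)) i), ({i0}, \<lambda>_\<in>{i0}. snd (Fo (Cod E e)) (ff e i)),
   \<lambda>_\<in>{i0}. i0, \<lambda>_\<in>{i0}. aa e i)"
definition dl where "dl e i = lift (Xc (Cod E e) (ff e i)) (dA e i)"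

lemma obj_dom: "e \<in> Arr E \<Longrightarrow> Dom E e \<in> Obj E" and obj_cod: "e \<in> Arr E \<Longrightarrow> Cod E e \<in> Obj E"
  using catE by (simp_all add: cat_simps)

lemma dl:
  assumes e: "e \<in> Arr E" and i: "i \<in> fst (Fo (Dom E e))"
  shows "dl e i \<in> Arr E" "Cod E (dl e i) = Xc (Cod E e) (ff e i)" "Fa (dl e i) = dA e i"
    "Dom E (dl e i) = Xc (Dom E e) i"
proof -
  define X where "X = Dom E e"
  define Y where "Y = Cod E e"
  define j where "j = ff e i"
  have X: "X \<in> Obj E" and Y: "Y \<in> Obj E" unfolding X_def Y_def using obj_dom obj_cod e by auto
  have iX: "i \<in> fst (Fo X)" using i X_def by simp
  have j: "j \<in> fst (Fo Y)" unfolding j_def Y_def using PiE_mem[OF Fa_props(1)[OF e] i] .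
  have Ai: "snd (Fo X) i \<in> Obj C" using PiE_mem[OF Fo_obj[OF X] iX] .
  have Bj: "snd (Fo Y) j \<in> Obj C" using PiE_mem[OF Fo_obj[OF Y] j] .
  have ah: "aa e i \<in> hom C (snd (Fo X) i) (snd (Fo Y) j)" using Fa_props(3)[OF e i] unfolding X_def Y_def j_def .
  have dAa: "dA e i \<in> Arr (Fam C)"
    unfolding Fam_Arr_iff' dA_def using Ai Bj ah by (simp add: X_def Y_def j_def)
  have dAc: "Cod (Fam C) (dA e i) = Fo (Xc Y j)"
    using iota(5)[OF Y j] unfolding Fam_Cod_fst dA_def Y_def j_def by simp
  note l = lift[OF iota(6)[OF Y j] dAa dAc]
  show a: "dl e i \<in> Arr E" "Cod E (dl e i) = Xc (Cod E e) (ff e i)" "Fa (dl e i) = dA e i"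
    using l unfolding dl_def Y_def j_def by auto
  note iY = iota[OF Y j] and iX' = iota[OF X iX]
  have c1: "Cod E (dl e i) = Dom E (iota Y j)" using a(2) iY(4) Y_def j_def by simp
  have c2: "Cod E (iota X i) = Dom E e" using iX'(2) X_def by simp
  have g1a: "Comp E (iota Y j) (dl e i) \<in> Arr E" using catE a(1) iY(1) c1 by (simp add: cat_simps)
  have g2a: "Comp E e (iota X i) \<in> Arr E" using catE e iX'(1) c2 by (simp add: cat_simps)
  have cc: "Cod E (Comp E (iota Y j) (dl e i)) = Cod E (Comp E e (iota X i))"
    using catE a(1) iY(1) c1 e iX'(1) c2 iY(2) Y_def by (simp add: cat_simps)
  have F1: "Fa (Comp E (iota Y j) (dl e i)) = (({i0}, \<lambda>_\<in>{i0}. snd (Fo X) i), Fo Y, \<lambda>_\<in>{i0}. j, \<lambda>_\<in>{i0}. aa e i)"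
  proof -
    have "Fa (Comp E (iota Y j) (dl e i)) = Comp (Fam C) (jC (Fo Y) j) (dA e i)"
      using ff(8)[OF a(1) iY(1) c1] a(3) iY(3) by simp
    also have "\<dots> = (fst (dA e i), Fo Y, \<lambda>x\<in>fst (fst (dA e i)). j, \<lambda>x\<in>fst (fst (dA e i)). snd (snd (snd (dA e i))) x)"
      by (rule comp_jC_left) (use ff(3)[OF Y] j dAa in \<open>auto simp: dA_def Fam_Cod_fst Y_def j_def\<close>)
    also have "\<dots> = (({i0}, \<lambda>_\<in>{i0}. snd (Fo X) i), Fo Y, \<lambda>_\<in>{i0}. j, \<lambda>_\<in>{i0}. aa e i)"
      by (simp only: dA_def X_def fst_conv snd_conv restrict_restrict_same)
    finally show ?thesis .
  qed
  have F2: "Fa (Comp E e (iota X i)) = (({i0}, \<lambda>_\<in>{i0}. snd (Fo X) i), Fo Y, \<lambda>_\<in>{i0}. j, \<lambda>_\<in>{i0}. aa e i)"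
  proof -
    have fe: "fst (Fa e) = Fo X" using Fa_decomp[OF e] X_def by simp
    have "Fa (Comp E e (iota X i)) = Comp (Fam C) (Fa e) (jC (fst (Fa e)) i)"
      using ff(8)[OF iX'(1) e c2] iX'(3) fe by simp
    also have "\<dots> = (({i0}, \<lambda>_\<in>{i0}. snd (fst (Fa e)) i), fst (snd (Fa e)), \<lambda>_\<in>{i0}. fst (snd (snd (Fa e))) i,
        \<lambda>_\<in>{i0}. snd (snd (snd (Fa e))) i)"
      by (rule comp_jC_right) (use ff(4)[OF e] fe iX in auto)
    also have "\<dots> = (({i0}, \<lambda>_\<in>{i0}. snd (Fo X) i), Fo Y, \<lambda>_\<in>{i0}. j, \<lambda>_\<in>{i0}. aa e i)"
    proof -
      have p: "snd (fst (Fa e)) = snd (Fo X)" "fst (snd (Fa e)) = Fo Y" using Fa_decomp[OF e] X_def Y_def by simp_all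
      have q: "fst (snd (snd (Fa e))) = ff e" "snd (snd (snd (Fa e))) = aa e" unfolding ff_def aa_def by simp_all
      show ?thesis unfolding p q j_def ..
    qed
    finally show ?thesis .
  qed
  have "Comp E (iota Y j) (dl e i) = Comp E e (iota X i)"
    by (rule lift_eq[OF g1a g2a cc]) (simp add: F1 F2)
  then have "Dom E (Comp E (iota Y j) (dl e i)) = Dom E (Comp E e (iota X i))" by simp
  then show "Dom E (dl e i) = Xc (Dom E e) i"
    using catE a(1) iY(1) c1 e iX'(1) c2 iX'(4) X_def by (simp add: cat_simps)
qed

definition Ko where "Ko X = (fst (Fo X), \<lambda>i\<in>fst (Fo X). Xc X i)"
definition Ka where "Ka e = (Ko (Dom E e), Ko (Cod E e), ff e, \<lambda>i\<in>fst (Fo (Dom E e)). dl e i)"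

lemma Xc_Dc: "X \<in> Obj E \<Longrightarrow> i \<in> fst (Fo X) \<Longrightarrow> Xc X i \<in> Obj Dc"
  using iota(5,6) by (simp add: Dc_simps)

lemma Ko_obj: "X \<in> Obj E \<Longrightarrow> Ko X \<in> Obj (Fam Dc)"
  unfolding Ko_def by (simp add: Xc_Dc)

lemma dl_Dc: "e \<in> Arr E \<Longrightarrow> i \<in> fst (Fo (Dom E e)) \<Longrightarrow> dl e i \<in> hom Dc (Xc (Dom E e) i) (Xc (Cod E e) (ff e i))"
  using dl[of e i] iota(5)[of "Dom E e" i] iota(5)[of "Cod E e" "ff e i"] PiE_mem[OF Fa_props(1), of e i]
    obj_dom obj_cod by (simp add: Dc_simps in_hom)

lemma Ka_arr: assumes e: "e \<in> Arr E"
  shows "Ka e \<in> hom (Fam Dc) (Ko (Dom E e)) (Ko (Cod E e))"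
proof -
  have "\<forall>i\<in>fst (Fo (Dom E e)). dl e i \<in> hom Dc (Xc (Dom E e) i) (Xc (Cod E e) (ff e i))"
    using dl_Dc e by blast
  moreover have "\<forall>i\<in>fst (Fo (Dom E e)). ff e i \<in> fst (Fo (Cod E e))" using PiE_mem[OF Fa_props(1)[OF e]] by blast
  ultimately show ?thesis
    unfolding Ka_def Ko_def using Fa_props(1)[OF e] e obj_dom obj_cod Xc_Dc by (simp add: in_hom)
qed

lemma Fo_K: "X \<in> Obj E \<Longrightarrow> Fam_fo Go (Ko X) = Fo X"
proof -
  assume X: "X \<in> Obj E"
  have "(\<lambda>i\<in>fst (Fo X). Go (Xc X i)) = snd (Fo X)"
  proof -
    have "(\<lambda>i\<in>fst (Fo X). Go (Xc X i)) = (\<lambda>i\<in>fst (Fo X). snd (Fo X) i)"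
      by (rule restrict_ext) (simp add: Go_def iota(5)[OF X])
    also have "\<dots> = snd (Fo X)" using PiE_restrict[OF Fo_obj[OF X]] by simp
    finally show ?thesis .
  qed
  moreover have "(\<lambda>i\<in>fst (Fo X). Go ((\<lambda>i\<in>fst (Fo X). Xc X i) i)) = (\<lambda>i\<in>fst (Fo X). Go (Xc X i))"
    by (rule restrict_ext) simp
  ultimately show ?thesis unfolding Fam_fo_def Ko_def by (simp add: prod_eq_iff)
qed

lemma Fa_K: assumes e: "e \<in> Arr E" shows "Fam_fa Go Ga (Ka e) = Fa e"
proof -
  have a: "(\<lambda>i\<in>fst (Fo (Dom E e)). Ga (dl e i)) = aa e"
  proof -
    have "(\<lambda>i\<in>fst (Fo (Dom E e)). Ga (dl e i)) = (\<lambda>i\<in>fst (Fo (Dom E e)). aa e i)"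
      by (rule restrict_ext) (simp add: Ga_def aa_def dl(3)[OF e] dA_def)
    also have "\<dots> = aa e" using extensional_restrict[OF Fa_props(2)[OF e]] by simp
    finally show ?thesis .
  qed
  have b: "(\<lambda>i\<in>fst (Fo (Dom E e)). Ga ((\<lambda>i\<in>fst (Fo (Dom E e)). dl e i) i)) = (\<lambda>i\<in>fst (Fo (Dom E e)). Ga (dl e i))"
    by (rule restrict_ext) simp
  show ?thesis unfolding Fam_fa_def Ka_def Fa_decomp[OF e]
    using Fo_K[OF obj_dom[OF e]] Fo_K[OF obj_cod[OF e]] a b by (simp add: Ko_def)
qed

lemma K_faithful: "x \<in> Arr E \<Longrightarrow> y \<in> Arr E \<Longrightarrow> Dom E x = Dom E y \<Longrightarrow> Cod E x = Cod E y \<Longrightarrow> Ka x = Ka y \<Longrightarrow> x = y"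
  using lift_eq Fa_K by metis

end

context fibsetup
begin

lemma fst_Ko[simp]: "fst (Ko X) = fst (Fo X)" and snd_Ko: "snd (Ko X) = (\<lambda>i\<in>fst (Fo X). Xc X i)"
  unfolding Ko_def by simp_all

lemma Fa_single: "e \<in> Arr E \<Longrightarrow> fst (Fo (Dom E e)) = {i0} \<Longrightarrow>
   Fa e = (Fo (Dom E e), Fo (Cod E e), \<lambda>_\<in>{i0}. ff e i0, \<lambda>_\<in>{i0}. aa e i0)"
proof -
  assume e: "e \<in> Arr E" and d: "fst (Fo (Dom E e)) = {i0}"
  have "ff e \<in> extensional {i0}" using Fa_props(1)[OF e] d by (simp add: PiE_iff)
  then have 1: "ff e = (\<lambda>_\<in>{i0}. ff e i0)" by (rule ext_single)
  have "aa e \<in> extensional {i0}" using Fa_props(2)[OF e] d by simp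
  then have 2: "aa e = (\<lambda>_\<in>{i0}. aa e i0)" by (rule ext_single)
  show ?thesis using Fa_decomp[OF e] 1 2 by simp
qed

lemma K_ident: assumes X: "X \<in> Obj E" shows "Ka (Ident E X) = Ident (Fam Dc) (Ko X)"
proof -
  define I where "I = fst (Fo X)"
  have iX: "Ident E X \<in> Arr E" "Dom E (Ident E X) = X" "Cod E (Ident E X) = X" using catE X by (simp_all add: cat_simps)
  have d: "dl (Ident E X) i = Ident E (Xc X i)" if i: "i \<in> I" for i
  proof -
    have i': "i \<in> fst (Fo (Dom E (Ident E X)))" using i iX I_def by simp
    note dd = dl[OF iX(1) i']
    have ffi: "ff (Ident E X) i = i" using ff_id[OF X] i I_def by simp
    have aai: "aa (Ident E X) i = Ident C (snd (Fo X) i)" using aa_id[OF X] i I_def by simp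
    have o: "Xc X i \<in> Obj E" using iota(6)[OF X] i I_def by simp
    have h1: "(\<lambda>x\<in>{i0}. x) = (\<lambda>_\<in>{i0}. i0)" by (rule restrict_ext) simp
    have h2: "(\<lambda>x\<in>{i0}. Ident C ((\<lambda>_\<in>{i0}. snd (Fo X) i) x)) = (\<lambda>_\<in>{i0}. Ident C (snd (Fo X) i))"
      by (rule restrict_ext) simp
    have "Fa (Ident E (Xc X i)) = Fa (dl (Ident E X) i)"
      unfolding dd(3) ff(7)[OF o] iota(5)[OF X i[unfolded I_def]] dA_def iX ffi aai Fam_sel h1 h2 ..
    moreover have "Cod E (Ident E (Xc X i)) = Cod E (dl (Ident E X) i)" using dd(2) iX ffi catE o by (simp add: cat_simps)
    ultimately show ?thesis using lift_eq[OF dd(1)] catE o by (simp add: cat_simps)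
  qed
  have "(\<lambda>i\<in>I. dl (Ident E X) i) = (\<lambda>i\<in>I. Ident Dc ((\<lambda>i\<in>I. Xc X i) i))"
    by (rule restrict_ext) (simp add: d Dc_simps)
  then show ?thesis unfolding Ka_def iX(2,3) ff_id[OF X] Ko_def Fam_sel I_def by simp
qed

lemma K_comp:
  assumes f: "f \<in> Arr E" and g: "g \<in> Arr E" and fg: "Cod E f = Dom E g"
  shows "Ka (Comp E g f) = Comp (Fam Dc) (Ka g) (Ka f)"
proof -
  define I where "I = fst (Fo (Dom E f))"
  have gf: "Comp E g f \<in> Arr E" "Dom E (Comp E g f) = Dom E f" "Cod E (Comp E g f) = Cod E g"
    using catE f g fg by (simp_all add: cat_simps)
  have d: "dl (Comp E g f) i = Comp E (dl g (ff f i)) (dl f i)" if i: "i \<in> I" for i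
  proof -
    define j where "j = ff f i"
    have i': "i \<in> fst (Fo (Dom E f))" using i I_def by simp
    have j: "j \<in> fst (Fo (Dom E g))" using PiE_mem[OF Fa_props(1)[OF f] i'] fg j_def by simp
    have i'': "i \<in> fst (Fo (Dom E (Comp E g f)))" using i' gf by simp
    note d1 = dl[OF f i'] and d2 = dl[OF g j] and d3 = dl[OF gf(1) i'']
    have c12: "Cod E (dl f i) = Dom E (dl g j)" using d1 d2 fg j_def by simp
    have ffc: "ff (Comp E g f) i = ff g j" using ff_comp[OF f g fg] i' j_def by simp
    have aac: "aa (Comp E g f) i = Comp C (aa g j) (aa f i)" using aa_comp[OF f g fg] i' j_def by simp
    have h3: "(\<lambda>x\<in>{i0}. (\<lambda>_\<in>{i0}. i0) ((\<lambda>_\<in>{i0}. i0) x)) = (\<lambda>_\<in>{i0}. i0)" by (rule restrict_ext) simp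
    have h4: "(\<lambda>x\<in>{i0}. Comp C ((\<lambda>_\<in>{i0}. aa g j) ((\<lambda>_\<in>{i0}. i0) x)) ((\<lambda>_\<in>{i0}. aa f i) x)) =
              (\<lambda>_\<in>{i0}. Comp C (aa g j) (aa f i))" by (rule restrict_ext) simp
    have "Fa (Comp E (dl g j) (dl f i)) = Comp (Fam C) (dA g j) (dA f i)"
      using ff(8)[OF d1(1) d2(1) c12] d1(3) d2(3) by simp
    also have "\<dots> = dA (Comp E g f) i"
      unfolding dA_def Fam_sel fst_conv h3 h4 gf(2,3) ffc aac ..
    finally have F: "Fa (Comp E (dl g j) (dl f i)) = Fa (dl (Comp E g f) i)" using d3(3) by simp
    have A: "Comp E (dl g j) (dl f i) \<in> Arr E" using catE d1(1) d2(1) c12 by (simp add: cat_simps)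
    have C: "Cod E (Comp E (dl g j) (dl f i)) = Cod E (dl (Comp E g f) i)"
      using catE d1(1) d2(1) c12 d2(2) d3(2) gf ffc by (simp add: cat_simps)
    show ?thesis using lift_eq[OF A d3(1) C F] j_def by simp
  qed
  have "(\<lambda>i\<in>I. dl (Comp E g f) i) =
     (\<lambda>i\<in>I. Comp Dc ((\<lambda>j\<in>fst (Fo (Dom E g)). dl g j) (ff f i)) ((\<lambda>i\<in>I. dl f i) i))"
  proof (rule restrict_ext)
    fix i assume i: "i \<in> I"
    have "ff f i \<in> fst (Fo (Dom E g))" using PiE_mem[OF Fa_props(1)[OF f]] i I_def fg by simp
    then show "dl (Comp E g f) i = Comp Dc ((\<lambda>j\<in>fst (Fo (Dom E g)). dl g j) (ff f i)) ((\<lambda>i\<in>I. dl f i) i)"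
      using d[OF i] i by (simp add: Dc_simps)
  qed
  moreover have "ff (Comp E g f) = (\<lambda>i\<in>I. ff g (ff f i))" using ff_comp[OF f g fg] I_def by simp
  ultimately show ?thesis unfolding Ka_def gf(2,3) Fam_sel fst_Ko I_def fg by simp
qed

lemma K_functor: "is_functor E (Fam Dc) Ko Ka"
  unfolding is_functor_def
  using catE Fam_cat[OF Dc_cat] Ko_obj Ka_arr K_ident K_comp by blast

end

context fibsetup
begin

lemma Fa_comp_iota:
  assumes e: "e \<in> Arr E" and i: "i \<in> fst (Fo (Dom E e))"
  shows "Fa (Comp E e (iota (Dom E e) i)) =
     (({i0}, \<lambda>_\<in>{i0}. snd (Fo (Dom E e)) i), Fo (Cod E e), \<lambda>_\<in>{i0}. ff e i, \<lambda>_\<in>{i0}. aa e i)"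
proof -
  define X where "X = Dom E e"
  have X: "X \<in> Obj E" using obj_dom e X_def by simp
  have iX: "i \<in> fst (Fo X)" using i X_def by simp
  note iX' = iota[OF X iX]
  have c2: "Cod E (iota X i) = Dom E e" using iX'(2) X_def by simp
  have fe: "fst (Fa e) = Fo X" using Fa_decomp[OF e] X_def by simp
  have "Fa (Comp E e (iota X i)) = Comp (Fam C) (Fa e) (jC (fst (Fa e)) i)"
    using ff(8)[OF iX'(1) e c2] iX'(3) fe by simp
  also have "\<dots> = (({i0}, \<lambda>_\<in>{i0}. snd (fst (Fa e)) i), fst (snd (Fa e)), \<lambda>_\<in>{i0}. fst (snd (snd (Fa e))) i,
      \<lambda>_\<in>{i0}. snd (snd (snd (Fa e))) i)"
    by (rule comp_jC_right) (use ff(4)[OF e] fe iX in auto)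
  also have "\<dots> = (({i0}, \<lambda>_\<in>{i0}. snd (Fo X) i), Fo (Cod E e), \<lambda>_\<in>{i0}. ff e i, \<lambda>_\<in>{i0}. aa e i)"
  proof -
    have p: "snd (fst (Fa e)) = snd (Fo X)" "fst (snd (Fa e)) = Fo (Cod E e)" using Fa_decomp[OF e] X_def by simp_all
    have q: "fst (snd (snd (Fa e))) = ff e" "snd (snd (snd (Fa e))) = aa e" unfolding ff_def aa_def by simp_all
    show ?thesis unfolding p q ..
  qed
  finally show ?thesis unfolding X_def .
qed

lemma jC_unique:
  assumes X: "X \<in> Obj E" and k1: "k1 \<in> Arr (Fam C)" and k2: "k2 \<in> Arr (Fam C)"
    and d1: "Dom (Fam C) k1 = Fo X" and d2: "Dom (Fam C) k2 = Fo X" and cc: "Cod (Fam C) k1 = Cod (Fam C) k2"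
    and eq: "\<And>i. i \<in> fst (Fo X) \<Longrightarrow> Comp (Fam C) k1 (jC (Fo X) i) = Comp (Fam C) k2 (jC (Fo X) i)"
  shows "k1 = k2"
proof -
  have f1: "fst k1 = Fo X" and f2: "fst k2 = Fo X" using d1 d2 by (simp_all add: Fam_Dom_fst)
  have pt: "fst (snd (snd k1)) i = fst (snd (snd k2)) i \<and> snd (snd (snd k1)) i = snd (snd (snd k2)) i"
    if i: "i \<in> fst (Fo X)" for i
  proof -
    have "Comp (Fam C) k1 (jC (fst k1) i) = Comp (Fam C) k2 (jC (fst k2) i)" using eq[OF i] f1 f2 by simp
    then have e: "(({i0}, \<lambda>_\<in>{i0}. snd (fst k1) i), fst (snd k1), \<lambda>_\<in>{i0}. fst (snd (snd k1)) i, \<lambda>_\<in>{i0}. snd (snd (snd k1)) i)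
      = (({i0}, \<lambda>_\<in>{i0}. snd (fst k2) i), fst (snd k2), \<lambda>_\<in>{i0}. fst (snd (snd k2)) i, \<lambda>_\<in>{i0}. snd (snd (snd k2)) i)"
      using comp_jC_right[OF k1, of i] comp_jC_right[OF k2, of i] i f1 f2 by simp
    have a: "(\<lambda>_\<in>{i0}. fst (snd (snd k1)) i) i0 = (\<lambda>_\<in>{i0}. fst (snd (snd k2)) i) i0"
      using e by (simp only: prod.inject)
    have b: "(\<lambda>_\<in>{i0}. snd (snd (snd k1)) i) i0 = (\<lambda>_\<in>{i0}. snd (snd (snd k2)) i) i0"
      using e by (simp only: prod.inject)
    show ?thesis using a b by simp
  qed
  have ex1: "fst (snd (snd k1)) \<in> extensional (fst (Fo X))" "snd (snd (snd k1)) \<in> extensional (fst (Fo X))"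
    using k1 f1 unfolding Fam_Arr_iff' by (simp_all add: PiE_iff)
  have ex2: "fst (snd (snd k2)) \<in> extensional (fst (Fo X))" "snd (snd (snd k2)) \<in> extensional (fst (Fo X))"
    using k2 f2 unfolding Fam_Arr_iff' by (simp_all add: PiE_iff)
  have "fst (snd (snd k1)) = fst (snd (snd k2))" by (rule extensionalityI[OF ex1(1) ex2(1)]) (use pt in blast)
  moreover have "snd (snd (snd k1)) = snd (snd (snd k2))" by (rule extensionalityI[OF ex1(2) ex2(2)]) (use pt in blast)
  moreover have "fst (snd k1) = fst (snd k2)" using cc by (simp add: Fam_Cod_fst)
  ultimately show ?thesis using f1 f2 by (simp add: prod_eq_iff)
qed

lemma coprodD:
  assumes "is_coproduct E I Xs S c"
  shows "S \<in> Obj E" "\<And>i. i \<in> I \<Longrightarrow> c i \<in> hom E (Xs i) S"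
    "\<And>Y g. Y \<in> Obj E \<Longrightarrow> (\<And>i. i \<in> I \<Longrightarrow> g i \<in> hom E (Xs i) Y) \<Longrightarrow> \<exists>h. h \<in> hom E S Y \<and> (\<forall>i\<in>I. Comp E h (c i) = g i)"
  using assms unfolding is_coproduct_def by blast+

lemma get_sum:
  assumes "\<And>i. i \<in> (I :: 'i set) \<Longrightarrow> Xs i \<in> Obj E"
  obtains S c where "is_coproduct E I Xs S c"
  using sums assms unfolding has_sums_def by blast

end

context fibsetup
begin

lemma K_full:
  assumes X: "X \<in> Obj E" and Y: "Y \<in> Obj E" and b: "b \<in> hom (Fam Dc) (Ko X) (Ko Y)"
  shows "\<exists>e\<in>hom E X Y. Ka e = b"
proof -
  define I where "I = fst (Fo X)"
  define f where "f = fst (snd (snd b))"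
  define d where "d = snd (snd (snd b))"
  have bA: "b \<in> Arr (Fam Dc)" and bD: "fst b = Ko X" and bC: "fst (snd b) = Ko Y"
    using b by (simp_all add: in_hom Fam_Dom_fst Fam_Cod_fst)
  have bt: "b = (Ko X, Ko Y, f, d)" using bD bC f_def d_def by (simp add: prod_eq_iff)
  have fI: "f \<in> I \<rightarrow>\<^sub>E fst (Fo Y)" and dI: "d \<in> extensional I"
    and dh: "\<And>i. i \<in> I \<Longrightarrow> d i \<in> hom Dc (Xc X i) (Xc Y (f i))"
    using bA unfolding Fam_Arr_iff' bD bC f_def[symmetric] d_def[symmetric] I_def
    by (auto simp: snd_Ko PiE_iff)
  have Xs: "\<And>i. i \<in> I \<Longrightarrow> Xc X i \<in> Obj E" using iota(6)[OF X] I_def by simp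
  obtain S c where cop: "is_coproduct E I (\<lambda>i. Xc X i) S c" using get_sum[of I "\<lambda>i. Xc X i"] Xs by blast
  note cp = coprodD[OF cop]
  have ci: "c i \<in> Arr E" "Dom E (c i) = Xc X i" "Cod E (c i) = S" if "i \<in> I" for i
    using cp(2)[OF that] by (simp_all add: in_hom)
  obtain h where h: "h \<in> hom E S X" "\<forall>i\<in>I. Comp E h (c i) = iota X i"
    using cp(3)[OF X, of "iota X"] iota[OF X] I_def by (auto simp: in_hom)
  have hA: "h \<in> Arr E" "Dom E h = S" "Cod E h = X" using h(1) by (simp_all add: in_hom)
  define k where "k = (Fo X, Fo S, \<lambda>i\<in>I. ff (c i) i0, \<lambda>i\<in>I. aa (c i) i0)"
  have cd: "fst (Fo (Dom E (c i))) = {i0}" "snd (Fo (Dom E (c i))) i0 = snd (Fo X) i" if "i \<in> I" for i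
    using ci(2)[OF that] iota(5)[OF X, of i] that I_def by simp_all
  have kA: "k \<in> Arr (Fam C)"
  proof -
    have "(\<lambda>i\<in>I. ff (c i) i0) \<in> I \<rightarrow>\<^sub>E fst (Fo S)"
      using PiE_mem[OF Fa_props(1)[OF ci(1)], of _ i0] cd ci(3) by auto
    moreover have "\<forall>i\<in>I. aa (c i) i0 \<in> hom C (snd (Fo X) i) (snd (Fo S) (ff (c i) i0))"
      using Fa_props(3)[OF ci(1), of _ i0] cd ci(3) by auto
    ultimately show ?thesis unfolding Fam_Arr_iff' k_def using Fo_obj[OF X] Fo_obj[OF cp(1)] I_def by simp
  qed
  have kD: "Dom (Fam C) k = Fo X" and kC: "Cod (Fam C) k = Fo S" unfolding k_def Fam_Dom_fst Fam_Cod_fst by simp_all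
  have kj: "Comp (Fam C) k (jC (Fo X) i) = Fa (c i)" if i: "i \<in> I" for i
  proof -
    have "Comp (Fam C) k (jC (fst k) i) = (({i0}, \<lambda>_\<in>{i0}. snd (fst k) i), fst (snd k), \<lambda>_\<in>{i0}. fst (snd (snd k)) i,
      \<lambda>_\<in>{i0}. snd (snd (snd k)) i)" by (rule comp_jC_right[OF kA]) (use i in \<open>simp add: k_def I_def\<close>)
    also have "\<dots> = (Fo (Dom E (c i)), Fo S, \<lambda>_\<in>{i0}. ff (c i) i0, \<lambda>_\<in>{i0}. aa (c i) i0)"
      using ci(2)[OF i] iota(5)[OF X, of i] i I_def by (simp add: k_def)
    also have "\<dots> = Fa (c i)" using Fa_single[OF ci(1)[OF i] cd(1)[OF i]] ci(3)[OF i] by simp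
    finally show ?thesis by (simp add: k_def)
  qed
  have FX: "Fo X \<in> Obj (Fam C)" using ff(3)[OF X] .
  have hk: "Comp (Fam C) (Fa h) k = Ident (Fam C) (Fo X)"
  proof (rule jC_unique[OF X])
    have comp: "Cod (Fam C) k = Dom (Fam C) (Fa h)" using kC ff(5)[OF hA(1)] hA by simp
    show "Comp (Fam C) (Fa h) k \<in> Arr (Fam C)" by (rule cat_comp_arr[OF catF kA ff(4)[OF hA(1)] comp])
    show "Ident (Fam C) (Fo X) \<in> Arr (Fam C)" by (rule cat_id_arr[OF catF FX])
    show "Dom (Fam C) (Comp (Fam C) (Fa h) k) = Fo X" using cat_comp_dom[OF catF kA ff(4)[OF hA(1)] comp] kD by simp
    show "Dom (Fam C) (Ident (Fam C) (Fo X)) = Fo X" by (rule cat_id_dom[OF catF FX])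
    show "Cod (Fam C) (Comp (Fam C) (Fa h) k) = Cod (Fam C) (Ident (Fam C) (Fo X))"
      using cat_comp_cod[OF catF kA ff(4)[OF hA(1)] comp] ff(6)[OF hA(1)] hA cat_id_cod[OF catF FX] by simp
    fix i assume i: "i \<in> fst (Fo X)"
    then have iI: "i \<in> I" using I_def by simp
    note j = jC[OF X i]
    have "Comp (Fam C) (Comp (Fam C) (Fa h) k) (jC (Fo X) i) = Comp (Fam C) (Fa h) (Comp (Fam C) k (jC (Fo X) i))"
      using cat_assoc[OF catF j(1) kA ff(4)[OF hA(1)]] j(2) kD kC ff(5)[OF hA(1)] hA by simp
    also have "\<dots> = Fa (Comp E h (c i))" using kj[OF iI] ff(8)[OF ci(1)[OF iI] hA(1)] ci(3)[OF iI] hA by simp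
    also have "\<dots> = jC (Fo X) i" using h(2) iI iota(3)[OF X i] by simp
    also have "\<dots> = Comp (Fam C) (Ident (Fam C) (Fo X)) (jC (Fo X) i)" using cat_id_left'[OF catF j(1) j(2)] by simp
    finally show "Comp (Fam C) (Comp (Fam C) (Fa h) k) (jC (Fo X) i) = Comp (Fam C) (Ident (Fam C) (Fo X)) (jC (Fo X) i)" .
  qed
  note kt = lift[OF cp(1) kA kC]
  define t where "t = lift S k"
  have tA: "t \<in> Arr E" "Cod E t = S" "Fa t = k" using kt t_def by auto
  have ht: "Comp E h t = Ident E X"
  proof (rule lift_eq)
    show "Comp E h t \<in> Arr E" using catE tA hA by (simp add: cat_simps)
    show "Ident E X \<in> Arr E" using catE X by (simp add: cat_simps)
    show "Cod E (Comp E h t) = Cod E (Ident E X)" using catE tA hA X by (simp add: cat_simps)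
    show "Fa (Comp E h t) = Fa (Ident E X)" using ff(8)[OF tA(1) hA(1)] tA hA hk ff(7)[OF X] by simp
  qed
  have tD: "Dom E t = X"
  proof -
    have "Dom E (Comp E h t) = Dom E (Ident E X)" using ht by simp
    then show ?thesis using catE tA hA X by (simp add: cat_simps)
  qed
  have tc: "Comp E t (iota X i) = c i" if i: "i \<in> I" for i
  proof (rule lift_eq)
    have i': "i \<in> fst (Fo X)" using i I_def by simp
    note io = iota[OF X i']
    show "Comp E t (iota X i) \<in> Arr E" using catE tA tD io by (simp add: cat_simps)
    show "c i \<in> Arr E" using ci[OF i] by simp
    show "Cod E (Comp E t (iota X i)) = Cod E (c i)" using catE tA tD io ci[OF i] by (simp add: cat_simps)
    show "Fa (Comp E t (iota X i)) = Fa (c i)" using ff(8)[OF io(1) tA(1)] io tA tD kj[OF i] by simp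
  qed
  have gi: "Comp E (iota Y (f i)) (d i) \<in> hom E (Xc X i) Y" if i: "i \<in> I" for i
  proof -
    have fi: "f i \<in> fst (Fo Y)" using PiE_mem[OF fI i] .
    note io = iota[OF Y fi]
    show ?thesis using dh[OF i] io catE by (simp add: in_hom Dc_simps cat_simps)
  qed
  obtain e' where e': "e' \<in> hom E S Y" "\<forall>i\<in>I. Comp E e' (c i) = Comp E (iota Y (f i)) (d i)"
    using cp(3)[OF Y, of "\<lambda>i. Comp E (iota Y (f i)) (d i)"] gi by blast
  have e'A: "e' \<in> Arr E" "Dom E e' = S" "Cod E e' = Y" using e'(1) by (simp_all add: in_hom)
  define e where "e = Comp E e' t"
  have eA: "e \<in> Arr E" "Dom E e = X" "Cod E e = Y" unfolding e_def using catE e'A tA tD by (simp_all add: cat_simps)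
  have eq: "Comp E e (iota X i) = Comp E (iota Y (f i)) (d i)" if i: "i \<in> I" for i
  proof -
    have i': "i \<in> fst (Fo X)" using i I_def by simp
    note io = iota[OF X i']
    have "Comp E e (iota X i) = Comp E e' (Comp E t (iota X i))"
      unfolding e_def using cat_assoc[OF catE io(1) tA(1) e'A(1)] io tD tA e'A by simp
    then show ?thesis using tc[OF i] e'(2) i by simp
  qed
  have pe: "ff e i = f i \<and> aa e i = aa (d i) i0" if i: "i \<in> I" for i
  proof -
    have i': "i \<in> fst (Fo (Dom E e))" using i I_def eA by simp
    have fi: "f i \<in> fst (Fo Y)" using PiE_mem[OF fI i] .
    have dA': "d i \<in> Arr E" "Dom E (d i) = Xc X i" "Cod E (d i) = Xc Y (f i)" using dh[OF i] by (simp_all add: in_hom Dc_simps)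
    note io = iota[OF Y fi]
    have L: "Fa (Comp E e (iota X i)) = (({i0}, \<lambda>_\<in>{i0}. snd (Fo X) i), Fo Y, \<lambda>_\<in>{i0}. ff e i, \<lambda>_\<in>{i0}. aa e i)"
      using Fa_comp_iota[OF eA(1) i'] eA by simp
    have "Fa (Comp E (iota Y (f i)) (d i)) = Comp (Fam C) (jC (Fo Y) (f i)) (Fa (d i))"
      using ff(8)[OF dA'(1) io(1)] dA' io by simp
    also have "\<dots> = (fst (Fa (d i)), Fo Y, \<lambda>x\<in>fst (fst (Fa (d i))). f i, \<lambda>x\<in>fst (fst (Fa (d i))). snd (snd (snd (Fa (d i)))) x)"
      by (rule comp_jC_left) (use ff(3)[OF Y] fi ff(4)[OF dA'(1)] ff(6)[OF dA'(1)] dA' io in auto)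
    also have "\<dots> = (({i0}, \<lambda>_\<in>{i0}. snd (Fo X) i), Fo Y, \<lambda>x\<in>{i0}. f i, \<lambda>x\<in>{i0}. aa (d i) x)"
    proof -
      have fd: "fst (Fa (d i)) = ({i0}, \<lambda>_\<in>{i0}. snd (Fo X) i)"
        using Fa_decomp[OF dA'(1)] dA' iota(5)[OF X, of i] i I_def by simp
      have q: "snd (snd (snd (Fa (d i)))) = aa (d i)" by (simp add: aa_def)
      show ?thesis unfolding fd q fst_conv ..
    qed
    finally have R: "Fa (Comp E (iota Y (f i)) (d i)) = (({i0}, \<lambda>_\<in>{i0}. snd (Fo X) i), Fo Y, \<lambda>x\<in>{i0}. f i, \<lambda>x\<in>{i0}. aa (d i) x)" .
    have "(\<lambda>_\<in>{i0}. ff e i) = (\<lambda>x\<in>{i0}. f i) \<and> (\<lambda>_\<in>{i0}. aa e i) = (\<lambda>x\<in>{i0}. aa (d i) x)"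
      using L R eq[OF i] by simp
    then have "(\<lambda>_\<in>{i0}. ff e i) i0 = (\<lambda>x\<in>{i0}. f i) i0 \<and> (\<lambda>_\<in>{i0}. aa e i) i0 = (\<lambda>x\<in>{i0}. aa (d i) x) i0"
      by simp
    then show ?thesis by simp
  qed
  have ffe: "ff e = f"
  proof (rule extensionalityI)
    show "ff e \<in> extensional I" using Fa_props(1)[OF eA(1)] eA I_def by (simp add: PiE_iff)
    show "f \<in> extensional I" using fI by (simp add: PiE_iff)
    show "\<And>i. i \<in> I \<Longrightarrow> ff e i = f i" using pe by blast
  qed
  have dle: "dl e i = d i" if i: "i \<in> I" for i
  proof -
    have i': "i \<in> fst (Fo (Dom E e))" using i I_def eA by simp
    note dd = dl[OF eA(1) i']
    have dA': "d i \<in> Arr E" "Dom E (d i) = Xc X i" "Cod E (d i) = Xc Y (f i)" using dh[OF i] by (simp_all add: in_hom Dc_simps)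
    have fi: "f i \<in> fst (Fo Y)" using PiE_mem[OF fI i] .
    have dd1: "fst (Fo (Dom E (d i))) = {i0}" "fst (Fo (Cod E (d i))) = {i0}"
      using dA' iota(5)[OF X, of i] iota(5)[OF Y fi] i I_def by simp_all
    have ffd: "ff (d i) i0 = i0" using ff_single[OF dA'(1) dd1] by simp
    show ?thesis
    proof (rule lift_eq[OF dd(1) dA'(1)])
      show "Cod E (dl e i) = Cod E (d i)" using dd(2) dA' ffe eA by simp
      show "Fa (dl e i) = Fa (d i)"
        unfolding dd(3) Fa_single[OF dA'(1) dd1(1)] dA_def dA'(2,3) iota(5)[OF X i[unfolded I_def]] iota(5)[OF Y fi]
          ffd eA(2,3) ffe using pe[OF i] by simp
    qed
  qed
  have "(\<lambda>i\<in>fst (Fo (Dom E e)). dl e i) = d"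
  proof (rule extensionalityI[OF _ dI])
    show "(\<lambda>i\<in>fst (Fo (Dom E e)). dl e i) \<in> extensional I" using eA I_def by simp
    show "\<And>i. i \<in> I \<Longrightarrow> (\<lambda>i\<in>fst (Fo (Dom E e)). dl e i) i = d i" using dle eA I_def by simp
  qed
  then have "Ka e = b" unfolding Ka_def bt eA(2,3) ffe by simp
  moreover have "e \<in> hom E X Y" using eA by (simp add: in_hom)
  ultimately show ?thesis by blast
qed

end

context fibsetup
begin

lemma K_surj:
  assumes Yo: "Yo \<in> Obj (Fam Dc)"
  shows "\<exists>X\<in>Obj E. Ko X = Yo"
proof -
  define I where "I = fst Yo"
  define Xs where "Xs = snd Yo"
  have XsP: "Xs \<in> I \<rightarrow>\<^sub>E Obj Dc" using Yo unfolding I_def Xs_def by (simp add: Fam_Obj_iff')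
  have Xo: "Xs i \<in> Obj E" "fst (Fo (Xs i)) = {i0}" if "i \<in> I" for i
    using PiE_mem[OF XsP that] by (simp_all add: Dc_simps)
  obtain S c where cop: "is_coproduct E I Xs S c" using get_sum[of I Xs] Xo by blast
  note cp = coprodD[OF cop]
  have ci: "c i \<in> Arr E" "Dom E (c i) = Xs i" "Cod E (c i) = S" if "i \<in> I" for i
    using cp(2)[OF that] by (simp_all add: in_hom)
  define a where "a = (\<lambda>i\<in>I. snd (Fo (Xs i)) i0)"
  define h where "h = ((I, a), Fo S, \<lambda>i\<in>I. ff (c i) i0, \<lambda>i\<in>I. aa (c i) i0)"
  have cd: "fst (Fo (Dom E (c i))) = {i0}" if "i \<in> I" for i using ci(2)[OF that] Xo[OF that] by simp
  have hA: "h \<in> Arr (Fam C)"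
  proof -
    have "a \<in> I \<rightarrow>\<^sub>E Obj C" unfolding a_def using PiE_mem[OF Fo_obj[OF Xo(1)], of _ i0] Xo(2) by auto
    moreover have "(\<lambda>i\<in>I. ff (c i) i0) \<in> I \<rightarrow>\<^sub>E fst (Fo S)"
      using PiE_mem[OF Fa_props(1)[OF ci(1)], of _ i0] cd ci(3) by auto
    moreover have "\<forall>i\<in>I. aa (c i) i0 \<in> hom C (a i) (snd (Fo S) (ff (c i) i0))"
      using Fa_props(3)[OF ci(1), of _ i0] cd ci(2,3) by (auto simp: a_def)
    ultimately show ?thesis unfolding Fam_Arr_iff' h_def using Fo_obj[OF cp(1)] by simp
  qed
  have hC: "Cod (Fam C) h = Fo S" unfolding h_def Fam_Cod_fst by simp
  note l = lift[OF cp(1) hA hC]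
  define X where "X = Dom E (lift S h)"
  have X: "X \<in> Obj E" unfolding X_def using l(1) obj_dom by simp
  have FoX: "Fo X = (I, a)" unfolding X_def using ff(5)[OF l(1)] l(3) by (simp add: Fam_Dom_fst h_def)
  have xc: "Xc X i = Xs i" if i: "i \<in> I" for i
  proof -
    have i': "i \<in> fst (Fo X)" using FoX i by simp
    note io = iota[OF X i']
    have eq: "Comp E (lift S h) (iota X i) = c i"
    proof (rule lift_eq)
      show "Comp E (lift S h) (iota X i) \<in> Arr E" using catE l io X_def by (simp add: cat_simps)
      show "c i \<in> Arr E" using ci[OF i] by simp
      show "Cod E (Comp E (lift S h) (iota X i)) = Cod E (c i)" using catE l io X_def ci[OF i] by (simp add: cat_simps)
      have "Fa (Comp E (lift S h) (iota X i)) = Comp (Fam C) h (jC (fst h) i)"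
        using ff(8)[OF io(1) l(1)] io l X_def FoX by (simp add: h_def)
      also have "\<dots> = (({i0}, \<lambda>_\<in>{i0}. snd (fst h) i), fst (snd h), \<lambda>_\<in>{i0}. fst (snd (snd h)) i,
          \<lambda>_\<in>{i0}. snd (snd (snd h)) i)" by (rule comp_jC_right[OF hA]) (use i in \<open>simp add: h_def\<close>)
      also have "\<dots> = (Fo (Xs i), Fo S, \<lambda>_\<in>{i0}. ff (c i) i0, \<lambda>_\<in>{i0}. aa (c i) i0)"
      proof -
        have "snd (Fo (Xs i)) \<in> extensional {i0}" using Fo_obj[OF Xo(1)[OF i]] Xo(2)[OF i] by (simp add: PiE_iff)
        then have "snd (Fo (Xs i)) = (\<lambda>_\<in>{i0}. snd (Fo (Xs i)) i0)" by (rule ext_single)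
        then have "Fo (Xs i) = ({i0}, \<lambda>_\<in>{i0}. a i)" using Xo(2)[OF i] i unfolding a_def
          by (simp add: prod_eq_iff)
        then show ?thesis using i by (simp add: h_def)
      qed
      also have "\<dots> = Fa (c i)" using Fa_single[OF ci(1)[OF i] cd[OF i]] ci(2,3)[OF i] by simp
      finally show "Fa (Comp E (lift S h) (iota X i)) = Fa (c i)" .
    qed
    have "Dom E (Comp E (lift S h) (iota X i)) = Dom E (c i)" using eq by simp
    then show ?thesis using catE l io X_def ci[OF i] by (simp add: cat_simps)
  qed
  have "Ko X = Yo"
  proof -
    have "(\<lambda>i\<in>I. Xc X i) = Xs"
    proof -
      have "(\<lambda>i\<in>I. Xc X i) = (\<lambda>i\<in>I. Xs i)" by (rule restrict_ext) (simp add: xc)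
      also have "\<dots> = Xs" using PiE_restrict[OF XsP] by simp
      finally show ?thesis .
    qed
    then show ?thesis unfolding Ko_def FoX I_def Xs_def by (simp add: prod_eq_iff)
  qed
  then show ?thesis using X by blast
qed

theorem main:
  "\<exists>(D :: ('eo, 'ea) category) (Go :: 'eo \<Rightarrow> 'co) (Ga :: 'ea \<Rightarrow> 'ca)
     (Ko :: 'eo \<Rightarrow> ('i, 'eo) fam_obj) (Ka :: 'ea \<Rightarrow> ('i, 'eo, 'ea) fam_arr) phi.
     is_discrete_fibration D C Go Ga \<and>
     is_equivalence E (Fam D) Ko Ka \<and>
     nat_iso E (Fam C) Fo Fa (Fam_fo Go \<circ> Ko) (Fam_fa Go Ga \<circ> Ka) phi"
proof (intro exI conjI)
  show "is_discrete_fibration Dc C Go Ga" by (rule G_disc)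
  show "is_equivalence E (Fam Dc) Ko Ka"
    by (rule equiv_from_surj[OF K_functor]) (use K_faithful K_full K_surj in auto)
  show "nat_iso E (Fam C) Fo Fa (Fam_fo Go \<circ> Ko) (Fam_fa Go Ga \<circ> Ka) (\<lambda>X. Ident (Fam C) (Fo X))"
    by (rule nat_iso_ident[OF FF]) (simp_all add: Fo_K Fa_K)
qed

end

theorem proposition2p5:
  fixes C :: "('co, 'ca) category"
    and E :: "('eo, 'ea) category"
    and Fo :: "'eo \<Rightarrow> ('i, 'co) fam_obj"
    and Fa :: "'ea \<Rightarrow> ('i, 'co, 'ca) fam_arr"
  assumes "is_category C"
    and "is_category E"
    and "has_sums E TYPE('i)"
    and "preserves_sums E (Fam C) Fo Fa TYPE('i)"
    and "is_discrete_fibration E (Fam C) Fo Fa"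
  shows "\<exists>(D :: ('eo, 'ea) category) (Go :: 'eo \<Rightarrow> 'co) (Ga :: 'ea \<Rightarrow> 'ca)
            (Ko :: 'eo \<Rightarrow> ('i, 'eo) fam_obj) (Ka :: 'ea \<Rightarrow> ('i, 'eo, 'ea) fam_arr) phi.
           is_discrete_fibration D C Go Ga \<and>
           is_equivalence E (Fam D) Ko Ka \<and>
           nat_iso E (Fam C) Fo Fa (Fam_fo Go \<circ> Ko) (Fam_fa Go Ga \<circ> Ka) phi"
proof -
  interpret fibsetup C E Fo Fa undefined
    by (rule fibsetup.intro[OF assms(1,2,3,5)])
  show ?thesis by (rule main)
qed

end
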